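(* Let $a>0$ and let $f$ be a $2a$-periodic function on $\mathbb{R}$ that is $C^\infty$ everywhere except at the points $2a\mathbb{Z}$, and suppose there is $\delta>0$ and a function $\varphi$ analytic on $(-\delta,\delta)$ such that $f(x)=\varphi(x)/x^2$ for $0<|x|<\delta$. Let $I[f]:=\int_{-a}^{a}f(x)\,\mathrm{d}x$, understood as a Hadamard finite-part integral. For $n\in\mathbb{Z}^+$ let $h=a/n$ and $T_n[f]:=h\sum_{i=-n,\ i\neq 0}^{n-1}f(ih)$. Then for every $\mu>0$, $$I[f]=T_n[f]-\frac{\pi^2}{3h}\varphi(0)+\frac{\varphi''(0)\,h}{2}+O(h^\mu)\qquad (h\to 0).$$
   Context: The Hadamard finite-part integral of $\varphi(x)/x^2$ over an interval containing $0$ is the finite part of $\int_{|x|>\epsilon}$ as $\epsilon\to0^+$, i.e. the limit after discarding the term divergent like $2\varphi(0)/\epsilon$. *)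

theory Defs
  imports "HOL-Analysis.Analysis" "HOL-Library.Landau_Symbols"
begin

definition real_analytic_on :: "(real \<Rightarrow> real) \<Rightarrow> real set \<Rightarrow> bool" where
  "real_analytic_on g S \<longleftrightarrow>
     (\<forall>x\<in>S. \<exists>r>0. \<exists>c::nat \<Rightarrow> real. \<forall>y. \<bar>y - x\<bar> < r \<longrightarrow> (\<lambda>k. c k * (y - x) ^ k) sums g y)"

definition smooth_on :: "(real \<Rightarrow> real) \<Rightarrow> real set \<Rightarrow> bool" where
  "smooth_on g S \<longleftrightarrow> (\<forall>k. ((deriv ^^ k) g) differentiable_on S)"

text \<open>Hadamard finite part of the integral of f over [-a,a], where f(x) = phi(x)/x^2 near 0:
  the limit as eps -> 0+ of the integral over eps <= |x| <= a minus the divergent term 2 phi(0)/eps.\<close>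
definition hadamard_fp_has_value :: "real \<Rightarrow> (real \<Rightarrow> real) \<Rightarrow> real \<Rightarrow> real \<Rightarrow> bool" where
  "hadamard_fp_has_value a f phi0 I \<longleftrightarrow>
     ((\<lambda>\<epsilon>. integral {-a..-\<epsilon>} f + integral {\<epsilon>..a} f - 2 * phi0 / \<epsilon>) \<longlongrightarrow> I) (at_right 0)"

definition trap_Tn :: "real \<Rightarrow> (real \<Rightarrow> real) \<Rightarrow> nat \<Rightarrow> real" where
  "trap_Tn a f n = (a / real n) * (\<Sum>i\<in>{-int n..int n - 1} - {0}. f (real_of_int i * (a / real n)))"

end

theory Submission
  imports Defs "HOL-Complex_Analysis.Complex_Analysis" "HOL-Real_Asymp.Real_Asymp"
begin

lemma mvt_bound:
  fixes f f' :: "real \<Rightarrow> real"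
  assumes der: "\<And>t. (f has_real_derivative f' t) (at t)"
    and bnd: "\<And>t. t \<in> {lo..hi} \<Longrightarrow> \<bar>f' t\<bar> \<le> M"
    and x: "x \<in> {lo..hi}" and z: "z \<in> {lo..hi}"
  shows "\<bar>f x - f z\<bar> \<le> (hi - lo) * M"
proof -
  have M: "M \<ge> 0" using bnd[OF x] by linarith
  have hl: "hi - lo \<ge> 0" using x by auto
  have main: "\<bar>f u - f v\<bar> \<le> (hi - lo) * M" if "u < v" "u \<in> {lo..hi}" "v \<in> {lo..hi}" for u v
  proof -
    have "\<exists>w>u. w < v \<and> f v - f u = (v - u) * f' w"
      by (rule MVT2) (use that der in auto)
    then obtain w where w: "u < w" "w < v" "f v - f u = (v - u) * f' w" by blast
    have "w \<in> {lo..hi}" using w that by auto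
    hence "\<bar>f' w\<bar> \<le> M" by (rule bnd)
    have "\<bar>f u - f v\<bar> = \<bar>f v - f u\<bar>" by (rule abs_minus_commute)
    also have "\<dots> = (v - u) * \<bar>f' w\<bar>" using w that by (simp add: abs_mult)
    finally have "\<bar>f u - f v\<bar> = (v - u) * \<bar>f' w\<bar>" .
    also have "\<dots> \<le> (hi - lo) * M"
      using \<open>\<bar>f' w\<bar> \<le> M\<close> that by (intro mult_mono) auto
    finally show ?thesis .
  qed
  consider "x < z" | "x = z" | "z < x" by linarith
  thus ?thesis
  proof cases
    case 1 thus ?thesis using main x z by blast
  next
    case 2 thus ?thesis using M hl by simp
  next
    case 3 thus ?thesis using main[of z x] x z by (simp add: abs_minus_commute)
  qed
qed

lemma tele_shift:
  fixes g :: "real \<Rightarrow> real"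
  shows "(\<Sum>j<N. g (h - a + real j * h)) - (\<Sum>j<N. g (0 - a + real j * h))
         = g (-a + real N * h) - g (-a)"
proof -
  have "(\<Sum>j<N. g (h - a + real j * h)) - (\<Sum>j<N. g (0 - a + real j * h))
        = (\<Sum>j<N. g (-a + real (Suc j) * h) - g (-a + real j * h))"
    by (simp add: sum_subtractf algebra_simps)
  also have "\<dots> = g (-a + real N * h) - g (-a)"
    by (subst sum_lessThan_telescope[where f = "\<lambda>j. g (-a + real j * h)"]) simp
  finally show ?thesis .
qed

lemma core_trap:
  fixes D :: "nat \<Rightarrow> real \<Rightarrow> real" and a :: real and m :: nat
  assumes a: "a > 0" and m: "m \<ge> 1"
    and der: "\<And>k x. (D k has_real_derivative D (Suc k) x) (at x)"
    and per: "\<And>k x. D k (x + 2*a) = D k x"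
  shows "\<exists>C. \<forall>n\<ge>1. \<bar>(a / real n) * (\<Sum>j<2*n. D 0 (-a + real j * (a / real n)))
                       - integral {-a..a} (D 0)\<bar> \<le> C * (a / real n)^m"
proof -
  have cont: "continuous_on A (D k)" for k A
    using der by (meson DERIV_isCont continuous_at_imp_continuous_on)
  have "compact (D m ` {-a..2*a})"
    by (intro compact_continuous_image cont) simp
  hence "bounded (D m ` {-a..2*a})" by (rule compact_imp_bounded)
  then obtain B where "\<forall>y\<in>D m ` {-a..2*a}. norm y \<le> B" by (auto simp: bounded_iff)
  hence B: "\<And>x. x \<in> {-a..2*a} \<Longrightarrow> \<bar>D m x\<bar> \<le> B" by auto
  show ?thesis
  proof (intro exI[of _ "2*a*B"] allI impI)
    fix n :: nat assume n: "n \<ge> 1"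
    define h where "h = a / real n"
    define N where "N = 2*n"
    have hpos: "h > 0" using a n by (simp add: h_def)
    have hle: "h \<le> a" using a n by (simp add: h_def field_simps)
    have Nh: "real N * h = 2*a" using n by (simp add: h_def N_def)
    define S where "S k x = h * (\<Sum>j<N. D k (x - a + real j * h))" for k x
    have Sder: "(S k has_real_derivative S (Suc k) x) (at x)" for k x
      unfolding S_def
      by (auto intro!: derivative_eq_intros DERIV_chain'[OF _ der])
    have Sper: "S k h = S k 0" for k
    proof -
      have "S k h - S k 0 = h * (D k (-a + real N * h) - D k (-a))"
        unfolding S_def right_diff_distrib[symmetric] tele_shift by simp
      also have "D k (-a + real N * h) = D k (-a)"
        using per[of k "-a"] by (simp add: Nh add.commute)
      finally show ?thesis by simp
    qed
    have Sm: "\<bar>S m x\<bar> \<le> 2*a*B" if x: "x \<in> {0..h}" for x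
    proof -
      have "\<bar>S m x\<bar> \<le> h * (\<Sum>j<N. \<bar>D m (x - a + real j * h)\<bar>)"
        unfolding S_def using hpos by (simp add: abs_mult sum_abs)
      also have "\<dots> \<le> h * (\<Sum>j<N. B)"
      proof (intro mult_left_mono sum_mono B)
        fix j assume "j \<in> {..<N}"
        hence "real j + 1 \<le> real N" by simp
        hence "real j * h + h \<le> 2 * a" using Nh hpos
          by (metis distrib_left mult.commute mult_1 mult_right_mono less_imp_le)
        thus "x - a + real j * h \<in> {-a..2*a}" using x hpos hle by auto
      qed (use hpos in auto)
      also have "\<dots> = 2*a*B" using Nh by (simp add: algebra_simps)
      finally show ?thesis .
    qed
    have Sk: "\<bar>S (m - i) x\<bar> \<le> 2*a*B * h^i" if "i < m" "x \<in> {0..h}" for i x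
      using that
    proof (induction i arbitrary: x)
      case 0 thus ?case using Sm by simp
    next
      case (Suc i)
      define k where "k = m - Suc i"
      have k1: "k \<ge> 1" using Suc.prems by (simp add: k_def)
      have kS: "Suc k = m - i" using Suc.prems by (simp add: k_def)
      obtain z where z: "0 < z" "z < h" "(S (k - 1) has_real_derivative 0) (at z)"
        using Rolle[of 0 h "S (k - 1)"] hpos Sper[of "k - 1"]
        by (metis Sder DERIV_isCont continuous_at_imp_continuous_on real_differentiable_def)
      have "(S (k - 1) has_real_derivative S k z) (at z)"
        using Sder[of "k - 1" z] k1 by simp
      hence Sz: "S k z = 0" using z(3) DERIV_unique by blast
      have "\<bar>S k x - S k z\<bar> \<le> (h - 0) * (2*a*B * h^i)"
      proof (rule mvt_bound[where f = "S k" and f' = "S (Suc k)" and lo = 0 and hi = h])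
        show "(S k has_real_derivative S (Suc k) t) (at t)" for t by (rule Sder)
        show "\<bar>S (Suc k) t\<bar> \<le> 2 * a * B * h ^ i" if "t \<in> {0..h}" for t
          using Suc.IH[of t] Suc.prems that kS by simp
      qed (use Suc.prems z in auto)
      thus ?case using Sz by (simp add: k_def algebra_simps)
    qed
    define P where "P u = integral {-2*a..u} (D 0)" for u
    have Pder: "(P has_real_derivative D 0 u) (at u)" if "u \<in> {-2*a<..<3*a}" for u
    proof -
      have "(P has_vector_derivative D 0 u) (at u within {-2*a..3*a})"
        unfolding P_def using that by (intro integral_has_vector_derivative cont) auto
      hence "(P has_vector_derivative D 0 u) (at u within {-2*a<..<3*a})"
        by (rule has_vector_derivative_within_subset) auto
      moreover have "at u within {-2*a<..<3*a} = at u" using that by (intro at_within_open) auto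
      ultimately have "(P has_vector_derivative D 0 u) (at u)" by simp
      thus ?thesis by (simp add: has_real_derivative_iff_has_vector_derivative)
    qed
    define W where "W x = h * (\<Sum>j<N. P (x - a + real j * h))" for x
    have Wder: "(W has_real_derivative S 0 x) (at x)" if "x \<in> {0..h}" for x
    proof -
      have "\<And>j. j \<in> {..<N} \<Longrightarrow> x - a + real j * h \<in> {-2*a<..<3*a}"
      proof -
        fix j assume "j \<in> {..<N}"
        hence "real j + 1 \<le> real N" by simp
        hence "real j * h + h \<le> 2 * a" using Nh hpos
          by (metis distrib_left mult.commute mult_1 mult_right_mono less_imp_le)
        moreover have j0: "real j * h \<ge> 0" using hpos by simp
        moreover have "0 \<le> x" "x \<le> h" using that by auto
        ultimately have "-2*a < x - a + real j * h" "x - a + real j * h < 3*a"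
          using hpos hle a by linarith+
        thus "x - a + real j * h \<in> {-2*a<..<3*a}" by simp
      qed
      thus ?thesis unfolding W_def S_def
        by (auto intro!: derivative_eq_intros DERIV_chain'[OF _ Pder])
    qed
    obtain \<zeta> where zeta: "0 < \<zeta>" "\<zeta> < h" "W h - W 0 = (h - 0) * S 0 \<zeta>"
      using MVT2[of 0 h W "S 0"] hpos Wder by auto
    have "W h - W 0 = h * (P (-a + real N * h) - P (-a))"
      unfolding W_def right_diff_distrib[symmetric] tele_shift by simp
    also have "P (-a + real N * h) - P (-a) = integral {-a..a} (D 0)"
    proof -
      have "integral {-2*a..-a} (D 0) + integral {-a..a} (D 0) = integral {-2*a..a} (D 0)"
        by (rule Henstock_Kurzweil_Integration.integral_combine) (use a cont in \<open>auto intro: integrable_continuous_real\<close>)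
      thus ?thesis using Nh by (simp add: P_def)
    qed
    finally have intS: "integral {-a..a} (D 0) = S 0 \<zeta>" using zeta hpos by simp
    have "\<bar>S 0 0 - S 0 \<zeta>\<bar> \<le> (h - 0) * (2*a*B * h^(m-1))"
    proof (rule mvt_bound[where f = "S 0" and f' = "S 1" and lo = 0 and hi = h])
      show "(S 0 has_real_derivative S 1 t) (at t)" for t using Sder[of 0 t] by simp
      show "\<bar>S 1 t\<bar> \<le> 2 * a * B * h ^ (m - 1)" if "t \<in> {0..h}" for t
        using Sk[of "m - 1" t] m that by simp
    qed (use zeta hpos in auto)
    also have "\<dots> = 2*a*B * h^m" using m by (cases m) (auto simp: algebra_simps)
    finally show "\<bar>(a / real n) * (\<Sum>j<2*n. D 0 (-a + real j * (a / real n)))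
                       - integral {-a..a} (D 0)\<bar> \<le> 2*a*B * (a / real n)^m"
      using intS by (simp add: S_def h_def N_def)
  qed
qed

lemma rGamma_reflection_real: "rGamma (x::real) * rGamma (1 - x) = sin (pi * x) / pi"
proof -
  have "complex_of_real (rGamma x * rGamma (1 - x)) = complex_of_real (sin (pi * x) / pi)"
    using rGamma_reflection_complex[of "complex_of_real x"]
    by (simp add: rGamma_complex_of_real[symmetric] sin_of_real[symmetric])
  thus ?thesis by (simp only: of_real_eq_iff)
qed

lemma Digamma_reflection_real:
  assumes "0 < x" "x < (1::real)"
  shows "Digamma x - Digamma (1 - x) = - pi * cos (pi * x) / sin (pi * x)"
proof -
  have nz1: "x \<notin> \<int>\<^sub>\<le>\<^sub>0" "1 - x \<notin> \<int>\<^sub>\<le>\<^sub>0" using assms by (auto elim!: nonpos_Ints_cases)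
  have s: "sin (pi * x) > 0" using assms by (intro sin_gt_zero) auto
  have "((\<lambda>y. rGamma y * rGamma (1 - y)) has_real_derivative
          (-rGamma x * Digamma x) * rGamma (1 - x) + rGamma x * (rGamma (1 - x) * Digamma (1 - x))) (at x)"
    using nz1 by (auto intro!: derivative_eq_intros)
  moreover have "(\<lambda>y. rGamma y * rGamma (1 - y)) = (\<lambda>y::real. sin (pi * y) / pi)"
    by (simp add: rGamma_reflection_real)
  moreover have "((\<lambda>y::real. sin (pi * y) / pi) has_real_derivative cos (pi * x)) (at x)"
    by (auto intro!: derivative_eq_intros)
  ultimately have "(-rGamma x * Digamma x) * rGamma (1 - x) + rGamma x * (rGamma (1 - x) * Digamma (1 - x))
      = cos (pi * x)" using DERIV_unique by metis
  hence "- (rGamma x * rGamma (1 - x)) * (Digamma x - Digamma (1 - x)) = cos (pi * x)"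
    by (simp add: algebra_simps)
  hence "- (sin (pi * x) / pi) * (Digamma x - Digamma (1 - x)) = cos (pi * x)"
    by (simp add: rGamma_reflection_real)
  thus ?thesis using s by (simp add: field_simps)
qed

lemma Trigamma_reflection_real:
  assumes "0 < x" "x < (1::real)"
  shows "Polygamma 1 x + Polygamma 1 (1 - x) = pi\<^sup>2 / (sin (pi * x))\<^sup>2"
proof -
  have nz1: "x \<notin> \<int>\<^sub>\<le>\<^sub>0" "1 - x \<notin> \<int>\<^sub>\<le>\<^sub>0" using assms by (auto elim!: nonpos_Ints_cases)
  have s: "sin (pi * x) > 0" using assms by (intro sin_gt_zero) auto
  have d1: "((\<lambda>y. Digamma y - Digamma (1 - y)) has_real_derivative
          Polygamma 1 x + Polygamma 1 (1 - x)) (at x)"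
    using nz1 by (auto intro!: derivative_eq_intros)
  have d2': "((\<lambda>y::real. - pi * cos (pi * y) / sin (pi * y)) has_real_derivative
          (- pi * (- sin (pi * x) * pi) * sin (pi * x) - - pi * cos (pi * x) * (cos (pi * x) * pi)) / (sin (pi * x) * sin (pi * x))) (at x)"
    using s by (intro derivative_eq_intros refl) auto
  have "(- pi * (- sin (pi * x) * pi) * sin (pi * x) - - pi * cos (pi * x) * (cos (pi * x) * pi))
        = pi\<^sup>2 * ((sin (pi * x))\<^sup>2 + (cos (pi * x))\<^sup>2)"
    by (simp only: power2_eq_square) algebra
  also have "\<dots> = pi\<^sup>2" by (simp only: sin_cos_squared_add mult_1_right)
  finally have d2: "((\<lambda>y::real. - pi * cos (pi * y) / sin (pi * y)) has_real_derivative
          pi\<^sup>2 / (sin (pi * x))\<^sup>2) (at x)"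
    using d2' by (simp add: power2_eq_square)
  have "((\<lambda>y::real. - pi * cos (pi * y) / sin (pi * y)) has_real_derivative
          Polygamma 1 x + Polygamma 1 (1 - x)) (at x)"
    by (rule has_field_derivative_transform_within_open[OF d1, of "{0<..<1}"])
       (use assms Digamma_reflection_real in auto)
  thus ?thesis using d2 DERIV_unique by blast
qed

lemma Trigamma_sums:
  assumes "(x::real) > 0"
  shows "(\<lambda>j. 1 / (x + real j)\<^sup>2) sums Polygamma 1 x"
proof -
  have "x \<noteq> 0" using assms by simp
  from Polygamma_LIMSEQ[OF this, of 1] show ?thesis
    by (simp add: inverse_eq_divide power2_eq_square)
qed

lemma Trigamma_sum_fractions:
  assumes m: "m \<ge> (1::nat)"
  shows "(\<Sum>k=1..m. Polygamma 1 (real k / real m)) = real m ^ 2 * pi\<^sup>2 / 6"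
proof -
  define u where "u J = (\<Sum>k=1..m. \<Sum>j<J. 1 / (real k + real j * real m)\<^sup>2)" for J
  have u_eq: "u J = (\<Sum>l<J * m. 1 / (real l + 1)\<^sup>2)" for J
  proof -
    have "(\<Sum>l<J * m. 1 / (real l + 1)\<^sup>2) = (\<Sum>j<J. \<Sum>l\<in>{j*m..<j*m+m}. 1 / (real l + 1)\<^sup>2)"
      by (rule sum.nat_group[symmetric])
    also have "\<dots> = (\<Sum>j<J. \<Sum>k=1..m. 1 / (real k + real j * real m)\<^sup>2)"
    proof (rule sum.cong[OF refl])
      fix j
      show "(\<Sum>l\<in>{j*m..<j*m+m}. 1 / (real l + 1)\<^sup>2) = (\<Sum>k=1..m. 1 / (real k + real j * real m)\<^sup>2)"
        by (rule sum.reindex_bij_witness[where i = "\<lambda>k. k + j*m - 1" and j = "\<lambda>l. l + 1 - j*m"])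
           (auto simp: of_nat_diff algebra_simps)
    qed
    also have "\<dots> = u J" unfolding u_def by (rule sum.swap)
    finally show ?thesis by simp
  qed
  have "(\<lambda>n. \<Sum>l<n. 1 / (real l + 1)\<^sup>2) \<longlonglongrightarrow> pi\<^sup>2 / 6"
    using inverse_squares_sums by (simp add: sums_def add.commute)
  hence "(\<lambda>J. \<Sum>l<J * m. 1 / (real l + 1)\<^sup>2) \<longlonglongrightarrow> pi\<^sup>2 / 6"
    using LIMSEQ_subseq_LIMSEQ[of _ _ "\<lambda>J. J * m"] m
    by (simp add: strict_mono_def o_def)
  moreover have "u = (\<lambda>J. \<Sum>l<J * m. 1 / (real l + 1)\<^sup>2)" by (rule ext) (rule u_eq)
  ultimately have L1: "u \<longlonglongrightarrow> pi\<^sup>2 / 6" by simp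
  have "u \<longlonglongrightarrow> (\<Sum>k=1..m. Polygamma 1 (real k / real m) / real m ^ 2)"
    unfolding u_def
  proof (intro tendsto_sum)
    fix k assume k: "k \<in> {1..m}"
    have "(\<lambda>j. 1 / (real k / real m + real j)\<^sup>2) sums Polygamma 1 (real k / real m)"
      using k m by (intro Trigamma_sums) auto
    hence "(\<lambda>j. 1 / (real k / real m + real j)\<^sup>2 / real m ^ 2) sums (Polygamma 1 (real k / real m) / real m ^ 2)"
      by (rule sums_divide)
    moreover have "1 / (real k / real m + real j)\<^sup>2 / real m ^ 2 = 1 / (real k + real j * real m)\<^sup>2" for j
      using m by (simp add: field_simps)
    ultimately show "(\<lambda>J. \<Sum>j<J. 1 / (real k + real j * real m)\<^sup>2) \<longlonglongrightarrow> Polygamma 1 (real k / real m) / real m ^ 2"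
      by (simp add: sums_def)
  qed
  with L1 have "(\<Sum>k=1..m. Polygamma 1 (real k / real m) / real m ^ 2) = pi\<^sup>2 / 6"
    using LIMSEQ_unique by blast
  thus ?thesis using m by (simp add: sum_divide_distrib[symmetric] field_simps)
qed

lemma csc_sum:
  assumes m: "m \<ge> (1::nat)"
  shows "(\<Sum>k=1..m-1. 1 / (sin (pi * (real k / real m)))\<^sup>2) = (real m ^ 2 - 1) / 3"
proof -
  have P1: "Polygamma 1 (1::real) = pi\<^sup>2 / 6" using Trigamma_sum_fractions[of 1] by simp
  have "(\<Sum>k=1..m. Polygamma 1 (real k / real m)) =
        (\<Sum>k=1..m-1. Polygamma 1 (real k / real m)) + Polygamma 1 1"
    using m by (cases m) (auto simp: sum.atLeast1_atMost_eq)
  hence S1: "(\<Sum>k=1..m-1. Polygamma 1 (real k / real m)) = (real m ^ 2 - 1) * pi\<^sup>2 / 6"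
    using Trigamma_sum_fractions[OF m] P1 by (simp add: algebra_simps)
  have S2: "(\<Sum>k=1..m-1. Polygamma 1 (1 - real k / real m)) = (\<Sum>k=1..m-1. Polygamma 1 (real k / real m))"
    by (rule sum.reindex_bij_witness[where i = "\<lambda>k. m - k" and j = "\<lambda>k. m - k"])
       (use m in \<open>auto simp: of_nat_diff field_simps\<close>)
  have "(\<Sum>k=1..m-1. pi\<^sup>2 / (sin (pi * (real k / real m)))\<^sup>2) =
        (\<Sum>k=1..m-1. Polygamma 1 (real k / real m) + Polygamma 1 (1 - real k / real m))"
    by (intro sum.cong refl Trigamma_reflection_real[symmetric]) (use m in auto)
  also have "\<dots> = (real m ^ 2 - 1) * pi\<^sup>2 / 3"
    unfolding sum.distrib S2 S1 by (simp add: field_simps)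
  finally have "pi\<^sup>2 * (\<Sum>k=1..m-1. 1 / (sin (pi * (real k / real m)))\<^sup>2) = pi\<^sup>2 * ((real m ^ 2 - 1) / 3)"
    unfolding sum_distrib_left by simp
  thus ?thesis by simp
qed

definition sm :: "(real \<Rightarrow> real) \<Rightarrow> real set \<Rightarrow> bool" where
  "sm G S \<longleftrightarrow> (\<forall>k. \<forall>x\<in>S. ((deriv^^k) G has_real_derivative (deriv^^(Suc k)) G x) (at x))"

lemma sm_smooth_on:
  assumes "smooth_on G S" "open S" shows "sm G S"
  unfolding sm_def
proof (intro allI ballI)
  fix k x assume x: "x \<in> S"
  have "(deriv^^k) G differentiable_on S" using assms(1) by (simp add: smooth_on_def)
  hence "(deriv^^k) G differentiable (at x)"
    using x assms(2) by (simp add: differentiable_on_eq_differentiable_at)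
  thus "((deriv^^k) G has_real_derivative (deriv^^(Suc k)) G x) (at x)"
    by (simp add: DERIV_deriv_iff_real_differentiable)
qed

lemma sm_union: "sm G S \<Longrightarrow> sm G T \<Longrightarrow> sm G (S \<union> T)"
  unfolding sm_def by blast

lemma sm_subset: "sm G S \<Longrightarrow> T \<subseteq> S \<Longrightarrow> sm G T"
  unfolding sm_def by blast

lemma sm_local:
  assumes S: "open S" and G: "sm G S" and eq: "\<And>y. y \<in> S \<Longrightarrow> r y = G y"
  shows "sm r S" "\<And>k y. y \<in> S \<Longrightarrow> (deriv^^k) r y = (deriv^^k) G y"
proof -
  have E: "\<forall>y\<in>S. (deriv^^k) r y = (deriv^^k) G y" for k
  proof (induction k)
    case 0 thus ?case using eq by simp
  next
    case (Suc k)
    show ?case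
    proof
      fix y assume y: "y \<in> S"
      have "eventually (\<lambda>z. z \<in> S) (nhds y)" using S y by (rule eventually_nhds_in_open)
      hence "eventually (\<lambda>z. (deriv^^k) r z = (deriv^^k) G z) (nhds y)"
        by eventually_elim (use Suc.IH in auto)
      hence "deriv ((deriv^^k) r) y = deriv ((deriv^^k) G) y" by (rule deriv_cong_ev) simp
      thus "(deriv^^Suc k) r y = (deriv^^Suc k) G y" by simp
    qed
  qed
  thus "\<And>k y. y \<in> S \<Longrightarrow> (deriv^^k) r y = (deriv^^k) G y" by blast
  show "sm r S"
    unfolding sm_def
  proof (intro allI ballI)
    fix k x assume x: "x \<in> S"
    have "((deriv^^k) G has_real_derivative (deriv^^(Suc k)) G x) (at x)"
      using G x by (auto simp: sm_def)
    hence "((deriv^^k) r has_real_derivative (deriv^^(Suc k)) G x) (at x)"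
      by (rule has_field_derivative_transform_within_open[OF _ S x]) (use E in auto)
    thus "((deriv^^k) r has_real_derivative (deriv^^(Suc k)) r x) (at x)"
      using E x by metis
  qed
qed

lemma sm_lin:
  assumes S: "open S" and u: "sm u S" and v: "sm v S"
  shows "sm (\<lambda>x. u x + c * v x) S"
proof -
  define w where "w k x = (deriv^^k) u x + c * (deriv^^k) v x" for k x
  have wd: "(w k has_real_derivative w (Suc k) x) (at x)" if "x \<in> S" for k x
    unfolding w_def using u v that by (auto simp: sm_def intro!: derivative_eq_intros)
  have E: "\<forall>y\<in>S. (deriv^^k) (\<lambda>x. u x + c * v x) y = w k y" for k
  proof (induction k)
    case 0 thus ?case by (simp add: w_def)
  next
    case (Suc k)
    show ?case
    proof
      fix y assume y: "y \<in> S"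
      have "eventually (\<lambda>z. z \<in> S) (nhds y)" using S y by (rule eventually_nhds_in_open)
      hence "eventually (\<lambda>z. (deriv^^k) (\<lambda>x. u x + c * v x) z = w k z) (nhds y)"
        by eventually_elim (use Suc.IH in auto)
      hence "deriv ((deriv^^k) (\<lambda>x. u x + c * v x)) y = deriv (w k) y" by (rule deriv_cong_ev) simp
      also have "\<dots> = w (Suc k) y" using wd[OF y] by (rule DERIV_imp_deriv)
      finally show "(deriv^^Suc k) (\<lambda>x. u x + c * v x) y = w (Suc k) y" by simp
    qed
  qed
  show ?thesis
    unfolding sm_def
  proof (intro allI ballI)
    fix k x assume x: "x \<in> S"
    have "((deriv^^k) (\<lambda>x. u x + c * v x) has_real_derivative w (Suc k) x) (at x)"
      by (rule has_field_derivative_transform_within_open[OF wd[OF x] S x]) (use E in auto)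
    thus "((deriv^^k) (\<lambda>x. u x + c * v x) has_real_derivative (deriv^^(Suc k)) (\<lambda>x. u x + c * v x) x) (at x)"
      using E x by metis
  qed
qed

lemma hol_real_deriv:
  fixes F :: "complex \<Rightarrow> complex" and G :: "real \<Rightarrow> real"
  assumes F: "F holomorphic_on T" and T: "open T" and S: "open S" and ST: "of_real ` S \<subseteq> T"
    and eq: "\<And>x. x \<in> S \<Longrightarrow> F (of_real x) = of_real (G x)"
  shows "sm G S" "\<And>k x. x \<in> S \<Longrightarrow> (deriv^^k) F (of_real x) = of_real ((deriv^^k) G x)"
proof -
  have main: "\<forall>x\<in>S. (deriv^^k) F (of_real x) = of_real ((deriv^^k) G x) \<and>
        ((deriv^^k) G has_real_derivative (deriv^^(Suc k)) G x) (at x)" for k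
  proof (induction k)
    have step: "(deriv^^j) F (of_real x) = of_real ((deriv^^j) G x) \<and>
        ((deriv^^j) G has_real_derivative (deriv^^(Suc j)) G x) (at x) \<and>
        (deriv^^(Suc j)) F (of_real x) = of_real ((deriv^^(Suc j)) G x)"
      if IH: "\<forall>x\<in>S. (deriv^^j) F (of_real x) = of_real ((deriv^^j) G x)" and x: "x \<in> S" for j x
    proof -
      define w where "w = deriv ((deriv^^j) F) (of_real x)"
      have hol: "(deriv^^j) F holomorphic_on T" using F T by (rule holomorphic_higher_deriv)
      have xT: "of_real x \<in> T" using ST x by auto
      have "((deriv^^j) F has_field_derivative w) (at (of_real x))"
        unfolding w_def using hol T xT
        by (meson DERIV_deriv_iff_field_differentiable holomorphic_on_imp_differentiable_at)
      hence "((\<lambda>t. (deriv^^j) F (of_real t)) has_vector_derivative w) (at x)"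
        using has_vector_derivative_real_field by blast
      hence vd: "((\<lambda>t. complex_of_real ((deriv^^j) G t)) has_vector_derivative w) (at x)"
        by (rule has_vector_derivative_transform_within_open[OF _ S x]) (use IH in auto)
      hence "((\<lambda>t. Re (complex_of_real ((deriv^^j) G t))) has_real_derivative Re w) (at x)"
        by (rule has_field_derivative_Re)
      hence rd: "((deriv^^j) G has_real_derivative Re w) (at x)" by simp
      hence "((\<lambda>t. complex_of_real ((deriv^^j) G t)) has_vector_derivative of_real (Re w)) (at x)"
        by (rule has_vector_derivative_of_real)
      hence w: "w = of_real (Re w)" using vd vector_derivative_unique_at by blast
      have dG: "(deriv^^(Suc j)) G x = Re w" using rd DERIV_imp_deriv by simp
      show ?thesis using IH x rd w dG by (simp add: w_def)
    qed
    {
      case 0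
      show ?case using step[of 0] eq by simp
    next
      case (Suc k)
      have IH': "\<forall>x\<in>S. (deriv^^Suc k) F (of_real x) = of_real ((deriv^^Suc k) G x)"
        using step[of k] Suc.IH by blast
      show ?case using step[OF IH'] by blast
    }
  qed
  show "sm G S" unfolding sm_def using main by blast
  show "\<And>k x. x \<in> S \<Longrightarrow> (deriv^^k) F (of_real x) = of_real ((deriv^^k) G x)" using main by blast
qed

lemma lim_aux1: "c > 0 \<Longrightarrow> ((\<lambda>x::real. 1/x^2 - c^2/(sin(c*x))^2) \<longlongrightarrow> (- (c^2/3))) (at 0)"
  apply real_asymp
  apply (simp_all add: field_simps power2_eq_square)
  done
lemma lim_aux2: "c > 0 \<Longrightarrow> ((\<lambda>x::real. 1/x - c * cos(c*x)/sin(c*x)) \<longlongrightarrow> 0) (at 0)" by real_asymp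
lemma lim_aux3: "c > 0 \<Longrightarrow> ((\<lambda>x::real. 2 * c * cos(c*x)/sin(c*x) - 2 / x) \<longlongrightarrow> 0) (at_right 0)" by real_asymp

definition sincc :: "complex \<Rightarrow> complex" where
  "sincc w = (if w = 0 then 1 else sin w / w)"

definition sincr :: "real \<Rightarrow> real" where
  "sincr w = (if w = 0 then 1 else sin w / w)"

lemma sincc_of_real: "sincc (of_real t) = of_real (sincr t)"
  by (simp add: sincc_def sincr_def sin_of_real)

lemma sincc_holo: "sincc holomorphic_on A"
proof -
  have "(\<lambda>z. if z = 0 then deriv sin 0 else (sin z - sin 0) / (z - 0)) holomorphic_on (UNIV::complex set)"
    by (rule pole_lemma) (auto intro: holomorphic_intros)
  moreover have "deriv sin (0::complex) = 1"
    by (rule DERIV_imp_deriv) (auto intro!: derivative_eq_intros)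
  ultimately have "(\<lambda>z. if z = 0 then deriv sin 0 else (sin z - sin 0) / (z - 0)) = sincc"
    and "(\<lambda>z. if z = 0 then deriv sin 0 else (sin z - sin 0) / (z - 0)) holomorphic_on (UNIV::complex set)"
    by (auto simp: sincc_def)
  hence "sincc holomorphic_on UNIV" by simp
  thus ?thesis by (rule holomorphic_on_subset) simp
qed

lemma sincc_nz: assumes "norm w < pi" shows "sincc w \<noteq> 0"
proof
  assume h: "sincc w = 0"
  hence w0: "w \<noteq> 0" by (auto simp: sincc_def)
  hence "sin w = 0" using h by (simp add: sincc_def)
  then obtain n :: int where n: "w = of_real (of_int n * pi)" by (auto simp: sin_eq_0)
  hence "norm w = \<bar>of_int n\<bar> * pi" by (simp add: norm_mult)
  with assms have "\<bar>of_int n\<bar> < (1::real)" by simp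
  hence "n = 0" by linarith
  thus False using n w0 by simp
qed

lemma sincc_deriv0: "(sincc has_field_derivative 0) (at 0)"
proof -
  have hd: "sm sincr UNIV" "\<And>k x. x \<in> UNIV \<Longrightarrow> (deriv^^k) sincc (of_real x) = of_real ((deriv^^k) sincr x)"
    by (rule hol_real_deriv[where F = sincc and T = UNIV and S = UNIV, OF sincc_holo]; simp add: sincc_of_real)+
  have d: "(sincr has_real_derivative deriv sincr 0) (at 0)"
    using hd(1) unfolding sm_def by (metis UNIV_I funpow_0 funpow_Suc_right o_apply)
  have "((\<lambda>t. sincr (- t)) has_real_derivative deriv sincr 0 * (- 1)) (at 0)"
  proof -
    have d0: "(sincr has_real_derivative deriv sincr 0) (at (- 0))" using d by simp
    show ?thesis using DERIV_chain2[OF d0 DERIV_minus[OF DERIV_ident]] by simp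
  qed
  moreover have "(\<lambda>t. sincr (- t)) = sincr" by (auto simp: sincr_def)
  ultimately have "deriv sincr 0 = 0" using d DERIV_unique by fastforce
  hence "deriv sincc 0 = 0" using hd(2)[where k=1 and x=0] by simp
  moreover have "(sincc has_field_derivative deriv sincc 0) (at 0)"
    using sincc_holo[of UNIV]
    by (meson DERIV_deriv_iff_field_differentiable holomorphic_on_imp_differentiable_at open_UNIV UNIV_I)
  ultimately show ?thesis by simp
qed

locale hsetup =
  fixes a \<delta> :: real and f \<phi> :: "real \<Rightarrow> real"
  assumes a_pos: "a > 0"
    and periodic: "\<And>x. f (x + 2 * a) = f x"
    and smooth: "smooth_on f (- {2 * a * real_of_int k | k. True})"
    and delta_pos: "\<delta> > 0"
    and analytic: "real_analytic_on \<phi> {-\<delta><..<\<delta>}"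
    and near0: "\<And>x. 0 < \<bar>x\<bar> \<Longrightarrow> \<bar>x\<bar> < \<delta> \<Longrightarrow> f x = \<phi> x / x\<^sup>2"
begin

definition c where "c = pi / (2 * a)"
definition L where "L = {2 * a * real_of_int k | k. True}"
definition g1 where "g1 x = c^2 / (sin (c * x))^2"
definition g2 where "g2 x = c * cos (c * x) / sin (c * x)"

lemma c_pos: "c > 0" using a_pos by (simp add: c_def)
lemma c_a: "c * a = pi / 2" using a_pos by (simp add: c_def)

lemma L_iff: "x \<in> L \<longleftrightarrow> sin (c * x) = 0"
proof
  assume "x \<in> L"
  then obtain k where "x = 2 * a * real_of_int k" by (auto simp: L_def)
  hence "c * x = real_of_int k * pi" using a_pos by (simp add: c_def)
  thus "sin (c * x) = 0" by (simp add: sin_zero_iff_int2)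
next
  assume "sin (c * x) = 0"
  then obtain i :: int where "c * x = of_int i * pi" by (auto simp: sin_zero_iff_int2)
  hence "x = 2 * a * real_of_int i" using a_pos by (simp add: c_def field_simps)
  thus "x \<in> L" by (auto simp: L_def)
qed

lemma L_open: "open (- L)"
proof -
  have "- L = {x. sin (c * x) \<noteq> 0}" by (auto simp: L_iff)
  also have "open \<dots>"
    by (intro open_Collect_neq continuous_intros)
  finally show ?thesis .
qed

lemma L_small: "0 < \<bar>x\<bar> \<Longrightarrow> \<bar>x\<bar> < 2 * a \<Longrightarrow> x \<notin> L"
proof
  assume x: "0 < \<bar>x\<bar>" "\<bar>x\<bar> < 2 * a" and "x \<in> L"
  then obtain k where k: "x = 2 * a * real_of_int k" by (auto simp: L_def)
  hence "\<bar>x\<bar> = 2 * a * \<bar>real_of_int k\<bar>" using a_pos by (simp add: abs_mult)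
  with x a_pos have "0 < \<bar>real_of_int k\<bar>" "\<bar>real_of_int k\<bar> < 1"
    by (auto simp: zero_less_mult_iff)
  moreover have "\<bar>k\<bar> \<ge> 1 \<or> k = 0" by linarith
  hence "real_of_int \<bar>k\<bar> \<ge> 1 \<or> k = 0" by linarith
  ultimately show False by auto
qed

lemma sin_shift: "sin (c * (x + 2 * a)) = - sin (c * x)"
  using a_pos by (simp add: c_def distrib_left sin_add)
lemma cos_shift: "cos (c * (x + 2 * a)) = - cos (c * x)"
  using a_pos by (simp add: c_def distrib_left cos_add)

lemma L_shift: "x + 2 * a \<in> L \<longleftrightarrow> x \<in> L"
  by (simp add: L_iff sin_shift)

lemma g1_per: "g1 (x + 2 * a) = g1 x" by (simp add: g1_def sin_shift)
lemma g2_per: "g2 (x + 2 * a) = g2 x" by (simp add: g2_def sin_shift cos_shift)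

definition r0 where "r0 = (SOME r. r > 0 \<and> (\<exists>cf::nat \<Rightarrow> real. \<forall>y. \<bar>y - 0\<bar> < r \<longrightarrow> (\<lambda>k. cf k * (y - 0) ^ k) sums \<phi> y))"
lemma r0_ex: "r0 > 0 \<and> (\<exists>cf::nat \<Rightarrow> real. \<forall>y. \<bar>y - 0\<bar> < r0 \<longrightarrow> (\<lambda>k. cf k * (y - 0) ^ k) sums \<phi> y)"
proof -
  have "(0::real) \<in> {-\<delta><..<\<delta>}" using delta_pos by simp
  hence "\<exists>r>0. \<exists>cf::nat \<Rightarrow> real. \<forall>y. \<bar>y - 0\<bar> < r \<longrightarrow> (\<lambda>k. cf k * (y - 0) ^ k) sums \<phi> y"
    using analytic unfolding real_analytic_on_def by blast
  thus ?thesis unfolding r0_def by (rule someI_ex)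
qed
lemma r0_pos: "r0 > 0" using r0_ex by blast
definition cf where "cf = (SOME cf::nat \<Rightarrow> real. \<forall>y. \<bar>y - 0\<bar> < r0 \<longrightarrow> (\<lambda>k. cf k * (y - 0) ^ k) sums \<phi> y)"
lemma cf_sums: "\<bar>y\<bar> < r0 \<Longrightarrow> (\<lambda>k. cf k * y ^ k) sums \<phi> y"
proof -
  obtain cf0 :: "nat \<Rightarrow> real" where "\<forall>y. \<bar>y - 0\<bar> < r0 \<longrightarrow> (\<lambda>k. cf0 k * (y - 0) ^ k) sums \<phi> y"
    using r0_ex by blast
  hence "\<forall>y. \<bar>y - 0\<bar> < r0 \<longrightarrow> (\<lambda>k. cf k * (y - 0) ^ k) sums \<phi> y"
    unfolding cf_def by (rule someI[where P = "\<lambda>cf. \<forall>y. \<bar>y - 0\<bar> < r0 \<longrightarrow> (\<lambda>k. cf k * (y - 0) ^ k) sums \<phi> y"])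
  thus "\<bar>y\<bar> < r0 \<Longrightarrow> (\<lambda>k. cf k * y ^ k) sums \<phi> y" by simp
qed

definition Phi :: "complex \<Rightarrow> complex" where "Phi z = (\<Sum>k. of_real (cf k) * z ^ k)"

lemma Phi_summable: "norm (z::complex) < r0 \<Longrightarrow> summable (\<lambda>k. of_real (cf k) * z ^ k)"
proof -
  assume z: "norm z < r0"
  obtain y where y2: "norm z < y" and y1: "y < r0" using dense[OF z] by blast
  have y0: "y \<ge> 0" using y2 norm_ge_zero[of z] by linarith
  note y0 = y0 y1 y2
  hence y: "\<bar>y\<bar> < r0" "norm z < norm (complex_of_real y)" by simp_all
  have "summable (\<lambda>k. cf k * y ^ k)" using cf_sums[OF y(1)] by (rule sums_summable)
  hence "summable (\<lambda>k. complex_of_real (cf k * y ^ k))" by (simp only: summable_of_real_iff)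
  hence "summable (\<lambda>k. complex_of_real (cf k) * complex_of_real y ^ k)" by simp
  thus ?thesis using y(2) by (rule powser_inside)
qed

lemma Phi_holo: "Phi holomorphic_on ball 0 r0"
proof -
  have "\<forall>z\<in>ball 0 r0. \<exists>f'. (Phi has_field_derivative f') (at z)"
  proof
    fix z :: complex assume "z \<in> ball 0 r0"
    hence "norm z < r0" by simp
    thus "\<exists>f'. (Phi has_field_derivative f') (at z)"
      unfolding Phi_def[abs_def] using termdiffs_strong'[of r0 "\<lambda>k. of_real (cf k)" z] Phi_summable
      by blast
  qed
  thus ?thesis by (simp add: holomorphic_on_open)
qed

lemma Phi_real: "\<bar>y\<bar> < r0 \<Longrightarrow> Phi (of_real y) = of_real (\<phi> y)"
proof -
  assume y: "\<bar>y\<bar> < r0"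
  have "(\<lambda>k. complex_of_real (cf k * y ^ k)) sums complex_of_real (\<phi> y)"
    by (rule sums_of_real[OF cf_sums[OF y]])
  hence "(\<lambda>k. complex_of_real (cf k) * complex_of_real y ^ k) sums complex_of_real (\<phi> y)" by simp
  thus ?thesis unfolding Phi_def by (simp add: sums_iff)
qed

lemma Phi_S: "of_real ` {-r0<..<r0} \<subseteq> ball (0::complex) r0" by auto
lemma Phi_eq: "x \<in> {-r0<..<r0} \<Longrightarrow> Phi (of_real x) = of_real (\<phi> x)"
  by (rule Phi_real) auto

lemma phi_sm: "sm \<phi> {-r0<..<r0}"
  and phi_derivs: "\<And>k x. x \<in> {-r0<..<r0} \<Longrightarrow> (deriv^^k) Phi (of_real x) = of_real ((deriv^^k) \<phi> x)"
  using hol_real_deriv[OF Phi_holo open_ball open_greaterThanLessThan Phi_S Phi_eq] by blast+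


definition rho where "rho = min (min r0 \<delta>) a"
lemma rho_pos: "rho > 0" using r0_pos delta_pos a_pos by (simp add: rho_def)
lemma rho_le: "rho \<le> r0" "rho \<le> \<delta>" "rho \<le> a" by (simp_all add: rho_def)

definition phi0 where "phi0 = \<phi> 0"
definition phi1 where "phi1 = deriv \<phi> 0"
definition phi2 where "phi2 = deriv (deriv \<phi>) 0"

definition cc :: complex where "cc = of_real c"
definition M1 where "M1 z = 1 / (sincc (cc * z))^2"
definition M2 where "M2 z = z * cos (cc * z) / sincc (cc * z)"
definition H0 where "H0 z = Phi z - of_real phi0 * M1 z - of_real phi1 * M2 z"

lemma sincc_cc_holo: "(\<lambda>z. sincc (cc * z)) holomorphic_on A"
proof -
  have "(sincc \<circ> (\<lambda>z. cc * z)) holomorphic_on A"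
    by (rule holomorphic_on_compose) (auto intro: holomorphic_intros sincc_holo)
  thus ?thesis by (simp add: o_def)
qed

lemma sincc_cc_nz: "norm z < a \<Longrightarrow> sincc (cc * z) \<noteq> 0"
proof -
  assume z: "norm z < a"
  have "norm (cc * z) = c * norm z" using c_pos by (simp add: cc_def norm_mult)
  also have "\<dots> < c * a" using z c_pos by simp
  also have "\<dots> < pi" using c_a pi_gt_zero by linarith
  finally show ?thesis by (rule sincc_nz)
qed

lemma H0_holo: "H0 holomorphic_on ball 0 rho"
proof -
  have P: "Phi holomorphic_on ball 0 rho"
    by (rule holomorphic_on_subset[OF Phi_holo]) (use rho_le in auto)
  have nz: "\<And>z. z \<in> ball 0 rho \<Longrightarrow> sincc (cc * z) \<noteq> 0"
    using rho_le by (intro sincc_cc_nz) auto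
  show ?thesis unfolding H0_def[abs_def] M1_def[abs_def] M2_def[abs_def]
    using P nz by (intro holomorphic_intros sincc_cc_holo) auto
qed

lemma H0_0: "H0 0 = 0"
  using Phi_real[of 0] r0_pos by (simp add: H0_def M1_def M2_def sincc_def phi0_def)

lemma sincc_chain [derivative_intros]:
  "(g has_field_derivative g') (at x) \<Longrightarrow> ((\<lambda>z. sincc (g z)) has_field_derivative deriv sincc (g x) * g') (at x)"
proof -
  assume g: "(g has_field_derivative g') (at x)"
  have "(sincc has_field_derivative deriv sincc (g x)) (at (g x))"
    using sincc_holo[of UNIV]
    by (meson DERIV_deriv_iff_field_differentiable holomorphic_on_imp_differentiable_at open_UNIV UNIV_I)
  thus ?thesis using DERIV_chain2[OF _ g] by blast
qed

lemma deriv_sincc0: "deriv sincc 0 = 0"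
  using sincc_deriv0 by (rule DERIV_imp_deriv)

lemma Phi_der0: "(Phi has_field_derivative of_real phi1) (at 0)"
proof -
  have "Phi field_differentiable (at 0)"
    using Phi_holo r0_pos by (intro holomorphic_on_imp_differentiable_at[of _ "ball 0 r0"]) auto
  hence "(Phi has_field_derivative deriv Phi 0) (at 0)"
    by (simp add: DERIV_deriv_iff_field_differentiable)
  moreover have "deriv Phi 0 = of_real phi1"
    using phi_derivs[of 0 1] r0_pos by (simp add: phi1_def)
  ultimately show ?thesis by simp
qed

lemma H0_der0: "(H0 has_field_derivative 0) (at 0)"
proof -
  have "(H0 has_field_derivative
     of_real phi1 - of_real phi0 * (- (2 * (sincc (cc * 0)) * (deriv sincc (cc * 0) * (cc * 1))) / ((sincc (cc * 0))^2)^2)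
       - of_real phi1 * ((1 * cos (cc * 0) + 0 * (- sin (cc * 0) * (cc * 1))) * sincc (cc * 0) - 0 * cos (cc*0) * (deriv sincc (cc * 0) * (cc * 1))) / (sincc (cc * 0))^2) (at 0)"
    unfolding H0_def[abs_def] M1_def[abs_def] M2_def[abs_def]
    by (rule derivative_eq_intros Phi_der0 refl | simp add: sincc_def)+
  thus ?thesis by (simp add: deriv_sincc0 sincc_def)
qed

definition H1 where "H1 z = (if z = 0 then 0 else H0 z / z)"
definition H where "H z = (if z = 0 then deriv H1 0 else H1 z / z)"

lemma H1_holo: "H1 holomorphic_on ball 0 rho"
proof -
  have "(\<lambda>z. if z = 0 then deriv H0 0 else (H0 z - H0 0) / (z - 0)) holomorphic_on ball 0 rho"
    by (rule pole_lemma[OF H0_holo]) (use rho_pos in auto)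
  moreover have "(\<lambda>z. if z = 0 then deriv H0 0 else (H0 z - H0 0) / (z - 0)) = H1"
    using DERIV_imp_deriv[OF H0_der0] H0_0 by (auto simp: H1_def)
  ultimately show ?thesis by simp
qed

lemma H_holo: "H holomorphic_on ball 0 rho"
proof -
  have "(\<lambda>z. if z = 0 then deriv H1 0 else (H1 z - H1 0) / (z - 0)) holomorphic_on ball 0 rho"
    by (rule pole_lemma[OF H1_holo]) (use rho_pos in auto)
  moreover have "(\<lambda>z. if z = 0 then deriv H1 0 else (H1 z - H1 0) / (z - 0)) = H"
    by (auto simp: H_def H1_def)
  ultimately show ?thesis by simp
qed


lemma sin_cx_nz: "0 < \<bar>x\<bar> \<Longrightarrow> \<bar>x\<bar> < 2 * a \<Longrightarrow> sin (c * x) \<noteq> 0"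
  using L_small L_iff by blast

lemma alg1: "(S::real) \<noteq> 0 \<Longrightarrow> X \<noteq> 0 \<Longrightarrow> p * (1 / (S / (C * X))^2) / X / X = p * (C^2 / S^2)"
  by (simp add: field_simps power2_eq_square)
lemma alg2: "(S::real) \<noteq> 0 \<Longrightarrow> X \<noteq> 0 \<Longrightarrow> p * (X * K / (S / (C * X))) / X / X = p * (C * K / S)"
  by (simp add: field_simps)

lemma H_real:
  assumes x: "0 < \<bar>x\<bar>" "\<bar>x\<bar> < rho"
  shows "H (of_real x) = of_real (\<phi> x / x\<^sup>2 - phi0 * g1 x - phi1 * g2 x)"
proof -
  have x0: "x \<noteq> 0" using x by auto
  have xr: "\<bar>x\<bar> < r0" using x rho_le by linarith
  have s: "sin (c * x) \<noteq> 0" using x rho_le a_pos by (intro sin_cx_nz) auto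
  have cx: "c * x \<noteq> 0" using x0 c_pos by simp
  have ccx: "cc * of_real x = of_real (c * x)" by (simp add: cc_def)
  define q where "q = sin (c * x) / (c * x)"
  have sc: "sincc (of_real (c * x)) = of_real q"
    unfolding q_def using c_pos x0 by (subst sincc_of_real) (simp add: sincr_def)
  have "H0 (of_real x) = of_real (\<phi> x) - of_real phi0 * (1 / (of_real q)^2)
           - of_real phi1 * (of_real x * of_real (cos (c * x)) / of_real q)"
    unfolding H0_def M1_def M2_def ccx sc Phi_real[OF xr] cos_of_real by (rule refl)
  also have "\<dots> = of_real (\<phi> x - phi0 * (1 / q^2) - phi1 * (x * cos (c * x) / q))"
    by (simp only: of_real_mult of_real_diff of_real_divide of_real_power of_real_1)
  finally have H0x: "H0 (of_real x) = of_real (\<phi> x - phi0 * (1 / q^2) - phi1 * (x * cos (c * x) / q))" .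
  have "H (of_real x) = H0 (of_real x) / of_real x / of_real x"
    using x0 by (simp add: H_def H1_def)
  also have "\<dots> = of_real ((\<phi> x - phi0 * (1 / q^2) - phi1 * (x * cos (c * x) / q)) / x / x)"
    unfolding H0x by (simp only: of_real_divide)
  also have "(\<phi> x - phi0 * (1 / q^2) - phi1 * (x * cos (c * x) / q)) / x / x
         = \<phi> x / x / x - phi0 * (1 / q^2) / x / x - phi1 * (x * cos (c * x) / q) / x / x"
    by (simp only: diff_divide_distrib)
  also have "\<phi> x / x / x = \<phi> x / x\<^sup>2" by (simp add: power2_eq_square)
  also have "phi0 * (1 / q^2) / x / x = phi0 * g1 x"
    unfolding q_def g1_def by (rule alg1[OF s x0])
  also have "phi1 * (x * cos (c * x) / q) / x / x = phi1 * g2 x"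
    unfolding q_def g2_def by (rule alg2[OF s x0])
  finally show ?thesis .
qed

definition rr where "rr x = (if x \<in> L then Re (H 0) else f x - phi0 * g1 x - phi1 * g2 x)"

lemma rr_near: "0 < \<bar>x\<bar> \<Longrightarrow> \<bar>x\<bar> < rho \<Longrightarrow> rr x = \<phi> x / x\<^sup>2 - phi0 * g1 x - phi1 * g2 x"
proof -
  assume x: "0 < \<bar>x\<bar>" "\<bar>x\<bar> < rho"
  have "x \<notin> L" using x rho_le a_pos by (intro L_small) auto
  moreover have "f x = \<phi> x / x\<^sup>2" using x rho_le by (intro near0) auto
  ultimately show ?thesis by (simp add: rr_def)
qed

lemma H_cont: "isCont H 0"
  using H_holo rho_pos
  by (meson centre_in_ball holomorphic_on_imp_continuous_on continuous_on_eq_continuous_at open_ball)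

lemma H_Im0: "Im (H 0) = 0"
proof -
  have "((\<lambda>t::real. H (of_real t)) \<longlongrightarrow> H (of_real 0)) (at 0)"
    by (intro isCont_tendsto_compose[OF _ tendsto_of_real] tendsto_ident_at) (simp add: H_cont)
  hence "((\<lambda>t::real. Im (H (of_real t))) \<longlongrightarrow> Im (H 0)) (at 0)"
    by (intro tendsto_Im) simp
  moreover have "eventually (\<lambda>t::real. Im (H (of_real t)) = 0) (at 0)"
  proof -
    have "eventually (\<lambda>t::real. t \<in> ball 0 rho) (at 0)"
      using rho_pos by (intro eventually_at_in_open') auto
    moreover have "eventually (\<lambda>t::real. t \<noteq> 0) (at 0)" by (rule eventually_neq_at_within)
    ultimately show ?thesis
      by eventually_elim (simp add: H_real)
  qed
  hence "((\<lambda>t::real. Im (H (of_real t))) \<longlongrightarrow> 0) (at 0)"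
    by (rule tendsto_eventually)
  ultimately show ?thesis using tendsto_unique[OF at_neq_bot] by blast
qed

lemma H_rr: "\<bar>x\<bar> < rho \<Longrightarrow> H (of_real x) = of_real (rr x)"
proof -
  assume x: "\<bar>x\<bar> < rho"
  show ?thesis
  proof (cases "x = 0")
    case True
    have "0 \<in> L" by (auto simp: L_def)
    hence "rr x = Re (H 0)" using True by (simp add: rr_def)
    thus ?thesis using True H_Im0 by (simp add: complex_eq_iff)
  next
    case False
    thus ?thesis using x by (simp add: H_real rr_near)
  qed
qed

lemma rr_per: "rr (x + 2 * a) = rr x"
  by (simp add: rr_def L_shift periodic g1_per g2_per)

lemma rr_per_nat: "rr (x + 2 * a * real n) = rr x"
proof (induction n arbitrary: x)
  case 0 thus ?case by simp
next
  case (Suc n)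
  have "rr (x + 2 * a * real (Suc n)) = rr ((x + 2 * a * real n) + 2 * a)"
    by (simp add: algebra_simps)
  also have "\<dots> = rr x" by (simp add: rr_per Suc.IH)
  finally show ?case .
qed

lemma rr_per_int: "rr (x + 2 * a * real_of_int k) = rr x"
proof (cases "k \<ge> 0")
  case True
  then obtain n where "k = int n" by (metis nonneg_eq_int)
  thus ?thesis by (simp add: rr_per_nat)
next
  case False
  define n where "n = nat (- k)"
  have n: "k = - int n" using False by (simp add: n_def)
  have eqx: "x + 2 * a * real_of_int k + 2 * a * real n = x" using n by simp
  show ?thesis using rr_per_nat[of "x + 2 * a * real_of_int k" n] unfolding eqx by simp
qed


lemma f_sm: "sm f (-L)"
  using sm_smooth_on[OF smooth[folded L_def] L_open] .

lemma ccx: "cc * of_real x = of_real (c * x)" by (simp add: cc_def)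

lemma TL_open: "open {z. sin (cc * z) \<noteq> 0}"
  by (intro open_Collect_neq continuous_intros)

lemma TL_sub: "of_real ` (-L) \<subseteq> {z. sin (cc * z) \<noteq> 0}"
proof
  fix z :: complex assume "z \<in> of_real ` (-L)"
  then obtain x where x: "x \<notin> L" "z = of_real x" by auto
  have "sin (c * x) \<noteq> 0" using x L_iff by blast
  hence "sin (complex_of_real (c * x)) \<noteq> 0" by (metis of_real_eq_0_iff sin_of_real)
  thus "z \<in> {z. sin (cc * z) \<noteq> 0}" using x by (simp add: ccx)
qed

lemma g1_sm: "sm g1 (-L)"
proof -
  have hol: "(\<lambda>z. cc^2 / (sin (cc * z))^2) holomorphic_on {z. sin (cc * z) \<noteq> 0}"
    by (intro holomorphic_intros) auto
  have eq: "(\<lambda>z. cc^2 / (sin (cc * z))^2) (of_real x) = of_real (g1 x)" for x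
  proof -
    have "(\<lambda>z. cc^2 / (sin (cc * z))^2) (of_real x) = (of_real c)^2 / (sin (of_real (c * x)))^2"
      by (simp only: ccx) (simp add: cc_def)
    also have "\<dots> = of_real (c^2 / (sin (c * x))^2)"
      by (simp only: sin_of_real of_real_power of_real_divide)
    finally show ?thesis by (simp add: g1_def)
  qed
  show ?thesis using hol_real_deriv[OF hol TL_open L_open TL_sub eq] by blast
qed

lemma g2_sm: "sm g2 (-L)"
proof -
  have hol: "(\<lambda>z. cc * cos (cc * z) / sin (cc * z)) holomorphic_on {z. sin (cc * z) \<noteq> 0}"
    by (intro holomorphic_intros) auto
  have eq: "(\<lambda>z. cc * cos (cc * z) / sin (cc * z)) (of_real x) = of_real (g2 x)" for x
    by (simp only: ccx cos_of_real sin_of_real) (simp add: cc_def g2_def)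
  show ?thesis using hol_real_deriv[OF hol TL_open L_open TL_sub eq] by blast
qed

lemma rr_sm_off: "sm rr (-L)"
proof -
  have "sm (\<lambda>x. (\<lambda>x. f x + (- phi0) * g1 x) x + (- phi1) * g2 x) (-L)"
    by (intro sm_lin L_open f_sm g1_sm g2_sm)
  thus ?thesis
    by (rule sm_local(1)[OF L_open]) (simp add: rr_def)
qed

lemma rr_sm_near: "sm rr (ball (2 * a * real_of_int k) rho)"
proof -
  define w where "w = 2 * a * real_of_int k"
  have hol: "(\<lambda>z. H (z - of_real w)) holomorphic_on ball (of_real w) rho"
  proof -
    have "(H \<circ> (\<lambda>z. z - of_real w)) holomorphic_on ball (of_real w) rho"
    proof (rule holomorphic_on_compose)
      show "(\<lambda>z. z - of_real w) holomorphic_on ball (of_real w) rho" by (intro holomorphic_intros)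
      show "H holomorphic_on (\<lambda>z. z - of_real w) ` ball (of_real w) rho"
        by (rule holomorphic_on_subset[OF H_holo]) (auto simp: dist_norm norm_minus_commute)
    qed
    thus ?thesis by (simp add: o_def)
  qed
  have sub: "of_real ` ball w rho \<subseteq> ball (complex_of_real w) rho"
    by (auto simp: dist_of_real)
  have eq: "H (of_real x - of_real w) = of_real (rr x)" if "x \<in> ball w rho" for x
  proof -
    have "\<bar>x - w\<bar> < rho" using that by (simp add: dist_real_def abs_minus_commute)
    hence "H (of_real (x - w)) = of_real (rr (x - w))" by (rule H_rr)
    moreover have "rr (x - w) = rr x" using rr_per_int[of "x - w" k] by (simp add: w_def)
    ultimately show ?thesis by simp
  qed
  show ?thesis using hol_real_deriv[OF hol open_ball open_ball sub eq] by (simp add: w_def)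
qed

lemma rr_sm: "sm rr UNIV"
  unfolding sm_def
proof (intro allI ballI)
  fix k x :: real
  fix k :: nat
  show "((deriv^^k) rr has_real_derivative (deriv^^(Suc k)) rr x) (at x)"
  proof (cases "x \<in> L")
    case False
    thus ?thesis using rr_sm_off unfolding sm_def by blast
  next
    case True
    then obtain j where j: "x = 2 * a * real_of_int j" by (auto simp: L_def)
    have "x \<in> ball (2 * a * real_of_int j) rho" using j rho_pos by simp
    thus ?thesis using rr_sm_near[of j] unfolding sm_def by blast
  qed
qed

end

lemma sm_deriv_per:
  assumes sm: "sm G UNIV" and per: "\<And>x. G (x + p) = G x"
  shows "(deriv^^k) G (x + p) = (deriv^^k) G x"
proof (induction k arbitrary: x)
  case 0 thus ?case using per by simp
next
  case (Suc k)
  have d1: "((deriv^^k) G has_real_derivative (deriv^^Suc k) G (x + p)) (at (x + p))"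
    using sm by (simp add: sm_def del: funpow.simps)
  have "((\<lambda>y. (deriv^^k) G (y + p)) has_real_derivative (deriv^^Suc k) G (x + p) * 1) (at x)"
    by (rule DERIV_chain2[where f = "(deriv^^k) G" and g = "\<lambda>y. y + p" and x = x, OF d1])
       (auto intro!: derivative_eq_intros)
  moreover have "(\<lambda>y. (deriv^^k) G (y + p)) = (deriv^^k) G" using Suc.IH by auto
  ultimately have "((deriv^^k) G has_real_derivative (deriv^^Suc k) G (x + p)) (at x)" by simp
  moreover have "((deriv^^k) G has_real_derivative (deriv^^Suc k) G x) (at x)"
    using sm by (simp add: sm_def del: funpow.simps)
  ultimately show ?case using DERIV_unique by blast
qed

context hsetup begin

lemma rr_core:
  assumes m: "m \<ge> 1"
  shows "\<exists>C. \<forall>n\<ge>1. \<bar>(a / real n) * (\<Sum>j<2*n. rr (-a + real j * (a / real n)))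
                       - integral {-a..a} rr\<bar> \<le> C * (a / real n)^m"
proof -
  have "\<exists>C. \<forall>n\<ge>1. \<bar>(a / real n) * (\<Sum>j<2*n. (\<lambda>k. (deriv^^k) rr) 0 (-a + real j * (a / real n)))
                       - integral {-a..a} ((\<lambda>k. (deriv^^k) rr) 0)\<bar> \<le> C * (a / real n)^m"
  proof (rule core_trap[OF a_pos m])
    show "((deriv^^k) rr has_real_derivative (deriv^^Suc k) rr x) (at x)" for k x
      using rr_sm by (simp add: sm_def del: funpow.simps)
    show "(deriv^^k) rr (x + 2 * a) = (deriv^^k) rr x" for k x
      by (rule sm_deriv_per[OF rr_sm rr_per])
  qed
  thus ?thesis by simp
qed

lemma rr_cont: "isCont rr x"
  using rr_sm unfolding sm_def by (metis DERIV_isCont UNIV_I funpow_0)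

lemma phi_cont: "x \<in> {-r0<..<r0} \<Longrightarrow> isCont ((deriv^^k) \<phi>) x"
  using phi_sm unfolding sm_def by (metis DERIV_isCont)

lemma ev_r0: "eventually (\<lambda>x. x \<in> {-r0<..<r0}) (at (0::real))"
  using r0_pos by (intro eventually_at_in_open') auto

lemma lim_A: "((\<lambda>x. (\<phi> x - phi0 - phi1 * x) / x\<^sup>2) \<longlongrightarrow> phi2 / 2) (at 0)"
proof -
  have d0: "((deriv^^0) \<phi> has_real_derivative (deriv^^1) \<phi> x) (at x)" if "x \<in> {-r0<..<r0}" for x
    using phi_sm that unfolding sm_def One_nat_def by blast
  have d1: "(deriv \<phi> has_real_derivative deriv (deriv \<phi>) x) (at x)" if "x \<in> {-r0<..<r0}" for x
  proof -
    have "((deriv^^(Suc 0)) \<phi> has_real_derivative (deriv^^(Suc (Suc 0))) \<phi> x) (at x)"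
      using phi_sm that unfolding sm_def by blast
    thus ?thesis by simp
  qed
  have c0: "isCont \<phi> 0" using phi_cont[of 0 0] r0_pos by simp
  have c1: "isCont (deriv \<phi>) 0" using phi_cont[of 0 1] r0_pos by simp
  have c2: "isCont (deriv (deriv \<phi>)) 0" using phi_cont[of 0 2] r0_pos by (simp add: numeral_2_eq_2)
  have inner: "((\<lambda>x. (deriv \<phi> x - phi1) / (2 * x)) \<longlongrightarrow> phi2 / 2) (at 0)"
  proof (rule lhopital[where f' = "\<lambda>x. deriv (deriv \<phi>) x" and g' = "\<lambda>x. 2"])
    show "((\<lambda>x. deriv \<phi> x - phi1) \<longlongrightarrow> 0) (at 0)"
      using c1 unfolding phi1_def isCont_def by (auto intro: tendsto_eq_intros)
    show "((\<lambda>x. 2 * x) \<longlongrightarrow> 0) (at (0::real))" by (auto intro!: tendsto_eq_intros)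
    show "\<forall>\<^sub>F x in at 0. 2 * x \<noteq> (0::real)" by (auto simp: eventually_at_filter)
    show "\<forall>\<^sub>F x in at 0. (2::real) \<noteq> 0" by simp
    show "\<forall>\<^sub>F x in at 0. ((\<lambda>x. deriv \<phi> x - phi1) has_real_derivative deriv (deriv \<phi>) x) (at x)"
      using ev_r0 by eventually_elim (use d1 in \<open>auto intro!: derivative_eq_intros\<close>)
    show "\<forall>\<^sub>F x in at 0. ((\<lambda>x. 2 * x) has_real_derivative 2) (at x)"
      by (auto intro!: derivative_eq_intros)
    show "((\<lambda>x. deriv (deriv \<phi>) x / 2) \<longlongrightarrow> phi2 / 2) (at 0)"
      using c2 unfolding phi2_def isCont_def by (auto intro: tendsto_eq_intros)
  qed
  show ?thesis
  proof (rule lhopital[where f' = "\<lambda>x. deriv \<phi> x - phi1" and g' = "\<lambda>x. 2 * x"])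
    show "((\<lambda>x. \<phi> x - phi0 - phi1 * x) \<longlongrightarrow> 0) (at 0)"
      using c0 unfolding phi0_def isCont_def by (auto intro!: tendsto_eq_intros)
    show "((\<lambda>x. x\<^sup>2) \<longlongrightarrow> 0) (at (0::real))" by (auto intro!: tendsto_eq_intros)
    show "\<forall>\<^sub>F x in at 0. x\<^sup>2 \<noteq> (0::real)" by (auto simp: eventually_at_filter)
    show "\<forall>\<^sub>F x in at 0. 2 * x \<noteq> (0::real)" by (auto simp: eventually_at_filter)
    show "\<forall>\<^sub>F x in at 0. ((\<lambda>x. \<phi> x - phi0 - phi1 * x) has_real_derivative deriv \<phi> x - phi1) (at x)"
      using ev_r0 by eventually_elim (use d0 in \<open>auto intro!: derivative_eq_intros\<close>)
    have "((\<lambda>x. x * x) has_real_derivative 2 * x) (at x)" for x :: real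
      by (auto intro!: derivative_eq_intros)
    hence "((\<lambda>x. x\<^sup>2) has_real_derivative 2 * x) (at x)" for x :: real
      by (simp add: power2_eq_square)
    thus "\<forall>\<^sub>F x in at 0. ((\<lambda>x. x\<^sup>2) has_real_derivative 2 * x) (at x)"
      by (intro always_eventually allI)
    show "((\<lambda>x. (deriv \<phi> x - phi1) / (2 * x)) \<longlongrightarrow> phi2 / 2) (at 0)" by (rule inner)
  qed
qed

lemma rr0: "rr 0 = phi2 / 2 - phi0 * c\<^sup>2 / 3"
proof -
  have lim: "((\<lambda>x. (\<phi> x - phi0 - phi1 * x) / x\<^sup>2 + phi0 * (1/x^2 - c^2/(sin(c*x))^2)
                 + phi1 * (1/x - c * cos(c*x)/sin(c*x))) \<longlongrightarrow> phi2 / 2 + phi0 * (- (c^2/3)) + phi1 * 0) (at 0)"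
    by (intro tendsto_add tendsto_mult lim_A lim_aux1 lim_aux2 c_pos tendsto_const)
  have ev: "eventually (\<lambda>x. (\<phi> x - phi0 - phi1 * x) / x\<^sup>2 + phi0 * (1/x^2 - c^2/(sin(c*x))^2)
                 + phi1 * (1/x - c * cos(c*x)/sin(c*x)) = rr x) (at 0)"
  proof -
    have "eventually (\<lambda>x::real. x \<in> {-rho<..<rho}) (at 0)"
      using rho_pos by (intro eventually_at_in_open') auto
    moreover have "eventually (\<lambda>x::real. x \<noteq> 0) (at 0)" by (rule eventually_neq_at_within)
    ultimately show ?thesis
    proof eventually_elim
      case (elim x)
      hence x: "0 < \<bar>x\<bar>" "\<bar>x\<bar> < rho" by auto
      show ?case using x
        by (simp add: rr_near g1_def g2_def field_simps power2_eq_square)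
    qed
  qed
  have "(rr \<longlongrightarrow> phi2 / 2 + phi0 * (- (c^2/3)) + phi1 * 0) (at 0)"
    by (rule Lim_transform_eventually[OF lim ev])
  moreover have "(rr \<longlongrightarrow> rr 0) (at 0)" using rr_cont isCont_def by blast
  ultimately have "rr 0 = phi2 / 2 + phi0 * (- (c^2/3)) + phi1 * 0"
    using tendsto_unique[OF at_neq_bot] by blast
  thus ?thesis by simp
qed

end

lemma ftc_real:
  fixes F f :: "real \<Rightarrow> real"
  assumes "lo \<le> hi" "\<And>x. x \<in> {lo..hi} \<Longrightarrow> (F has_real_derivative f x) (at x)"
  shows "(f has_integral (F hi - F lo)) {lo..hi}"
  using assms
  by (intro fundamental_theorem_of_calculus)
     (auto simp: has_real_derivative_iff_has_vector_derivative intro: has_vector_derivative_at_within)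

context hsetup begin

lemma f_decomp: "0 < \<bar>x\<bar> \<Longrightarrow> \<bar>x\<bar> \<le> a \<Longrightarrow> f x = rr x + phi0 * g1 x + phi1 * g2 x"
proof -
  assume x: "0 < \<bar>x\<bar>" "\<bar>x\<bar> \<le> a"
  have "x \<notin> L" using x a_pos by (intro L_small) auto
  thus ?thesis by (simp add: rr_def)
qed

lemma A1_der:
  assumes s: "sin (c * x) \<noteq> 0"
  shows "((\<lambda>x. - (c * cos (c * x) / sin (c * x))) has_real_derivative g1 x) (at x)"
proof -
  have dc: "((\<lambda>x. cos (c * x)) has_real_derivative - sin (c * x) * c) (at x)"
    by (auto intro!: derivative_eq_intros)
  have ds: "((\<lambda>x. sin (c * x)) has_real_derivative cos (c * x) * c) (at x)"
    by (auto intro!: derivative_eq_intros)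
  have d: "((\<lambda>x. - (c * cos (c * x) / sin (c * x))) has_real_derivative
      - ((c * (- sin (c * x) * c) * sin (c * x) - c * cos (c * x) * (cos (c * x) * c))
         / (sin (c * x) * sin (c * x)))) (at x)"
    by (rule DERIV_minus[OF DERIV_divide[OF DERIV_cmult[OF dc] ds s]])
  have "- (c * (- sin (c * x) * c) * sin (c * x) - c * cos (c * x) * (cos (c * x) * c))
        = c\<^sup>2 * ((sin (c * x))\<^sup>2 + (cos (c * x))\<^sup>2)"
    by (simp only: power2_eq_square) algebra
  also have "\<dots> = c\<^sup>2" by (simp only: sin_cos_squared_add mult_1_right)
  finally have num: "- (c * (- sin (c * x) * c) * sin (c * x) - c * cos (c * x) * (cos (c * x) * c)) = c\<^sup>2" .
  show ?thesis using d unfolding minus_divide_left num g1_def power2_eq_square[of "sin (c * x)"] .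
qed
lemma A2p_der:
  assumes s: "sin (c * x) > 0"
  shows "((\<lambda>x. ln (sin (c * x))) has_real_derivative g2 x) (at x)"
proof -
  have "((\<lambda>x. ln (sin (c * x))) has_real_derivative (cos (c * x) * (c * 1)) / sin (c * x)) (at x)"
    using s by (intro derivative_eq_intros refl) auto
  thus ?thesis by (simp add: g2_def mult_ac)
qed

lemma A2m_der:
  assumes s: "sin (c * x) < 0"
  shows "((\<lambda>x. ln (- sin (c * x))) has_real_derivative g2 x) (at x)"
proof -
  have "((\<lambda>x. ln (- sin (c * x))) has_real_derivative (- (cos (c * x) * (c * 1))) / (- sin (c * x))) (at x)"
    using s by (intro derivative_eq_intros refl) auto
  thus ?thesis by (simp add: g2_def mult_ac)
qed

lemma ca: "c * a = pi / 2" by (rule c_a)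

lemma sin_pos_right: "0 < x \<Longrightarrow> x \<le> a \<Longrightarrow> sin (c * x) > 0"
proof -
  assume x: "0 < x" "x \<le> a"
  have "c * x \<le> c * a" using x c_pos by simp
  hence "c * x < pi" using ca pi_gt_zero by linarith
  moreover have "0 < c * x" using x c_pos by simp
  ultimately show ?thesis by (intro sin_gt_zero)
qed

lemma sin_neg_left: "-a \<le> x \<Longrightarrow> x < 0 \<Longrightarrow> sin (c * x) < 0"
proof -
  assume x: "-a \<le> x" "x < 0"
  have "sin (c * (- x)) > 0" using x by (intro sin_pos_right) auto
  thus ?thesis by simp
qed

definition I1 where "I1 e = c * cos (c * e) / sin (c * e)"

lemma g1_int_right: "0 < e \<Longrightarrow> e \<le> a \<Longrightarrow> (g1 has_integral I1 e) {e..a}"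
proof -
  assume e: "0 < e" "e \<le> a"
  have "(g1 has_integral ((\<lambda>x. - (c * cos (c * x) / sin (c * x))) a - (\<lambda>x. - (c * cos (c * x) / sin (c * x))) e)) {e..a}"
  proof (rule ftc_real)
    show "\<And>x. x \<in> {e..a} \<Longrightarrow> ((\<lambda>x. - (c * cos (c * x) / sin (c * x))) has_real_derivative g1 x) (at x)"
      using e by (intro A1_der) (auto dest!: sin_pos_right[rotated] intro: less_imp_neq[symmetric])
  qed (use e in auto)
  thus ?thesis by (simp add: ca I1_def)
qed

lemma g1_int_left: "0 < e \<Longrightarrow> e \<le> a \<Longrightarrow> (g1 has_integral I1 e) {-a..-e}"
proof -
  assume e: "0 < e" "e \<le> a"
  have "(g1 has_integral ((\<lambda>x. - (c * cos (c * x) / sin (c * x))) (-e) - (\<lambda>x. - (c * cos (c * x) / sin (c * x))) (-a))) {-a..-e}"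
  proof (rule ftc_real)
    fix x assume x: "x \<in> {-a..-e}"
    hence "sin (c * x) < 0" using e by (intro sin_neg_left) auto
    thus "((\<lambda>x. - (c * cos (c * x) / sin (c * x))) has_real_derivative g1 x) (at x)"
      by (intro A1_der) simp
  qed (use e in auto)
  thus ?thesis by (simp add: ca I1_def)
qed

lemma g2_int_right: "0 < e \<Longrightarrow> e \<le> a \<Longrightarrow> (g2 has_integral (- ln (sin (c * e)))) {e..a}"
proof -
  assume e: "0 < e" "e \<le> a"
  have "(g2 has_integral ((\<lambda>x. ln (sin (c * x))) a - (\<lambda>x. ln (sin (c * x))) e)) {e..a}"
  proof (rule ftc_real)
    fix x assume x: "x \<in> {e..a}"
    hence "sin (c * x) > 0" using e by (intro sin_pos_right) auto
    thus "((\<lambda>x. ln (sin (c * x))) has_real_derivative g2 x) (at x)" by (rule A2p_der)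
  qed (use e in auto)
  thus ?thesis by (simp add: ca)
qed

lemma g2_int_left: "0 < e \<Longrightarrow> e \<le> a \<Longrightarrow> (g2 has_integral ln (sin (c * e))) {-a..-e}"
proof -
  assume e: "0 < e" "e \<le> a"
  have "(g2 has_integral ((\<lambda>x. ln (- sin (c * x))) (-e) - (\<lambda>x. ln (- sin (c * x))) (-a))) {-a..-e}"
  proof (rule ftc_real)
    fix x assume x: "x \<in> {-a..-e}"
    hence "sin (c * x) < 0" using e by (intro sin_neg_left) auto
    thus "((\<lambda>x. ln (- sin (c * x))) has_real_derivative g2 x) (at x)" by (rule A2m_der)
  qed (use e in auto)
  thus ?thesis by (simp add: ca)
qed

lemma rr_cont_on: "continuous_on A rr"
  using rr_cont by (simp add: continuous_at_imp_continuous_on)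

lemma rr_int: "(rr has_integral integral {lo..hi} rr) {lo..hi}"
  by (intro integrable_integral integrable_continuous_real rr_cont_on)

lemma f_int_right: "0 < e \<Longrightarrow> e \<le> a \<Longrightarrow>
   integral {e..a} f = integral {e..a} rr + phi0 * I1 e + phi1 * (- ln (sin (c * e)))"
proof -
  assume e: "0 < e" "e \<le> a"
  have "((\<lambda>x. rr x + phi0 * g1 x + phi1 * g2 x) has_integral
          (integral {e..a} rr + phi0 * I1 e + phi1 * (- ln (sin (c * e))))) {e..a}"
    by (intro has_integral_add has_integral_mult_right rr_int g1_int_right g2_int_right e)
  hence "(f has_integral (integral {e..a} rr + phi0 * I1 e + phi1 * (- ln (sin (c * e))))) {e..a}"
    by (rule has_integral_eq[rotated]) (use e in \<open>auto intro!: f_decomp[symmetric]\<close>)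
  thus ?thesis by (rule integral_unique)
qed

lemma f_int_left: "0 < e \<Longrightarrow> e \<le> a \<Longrightarrow>
   integral {-a..-e} f = integral {-a..-e} rr + phi0 * I1 e + phi1 * ln (sin (c * e))"
proof -
  assume e: "0 < e" "e \<le> a"
  have "((\<lambda>x. rr x + phi0 * g1 x + phi1 * g2 x) has_integral
          (integral {-a..-e} rr + phi0 * I1 e + phi1 * ln (sin (c * e)))) {-a..-e}"
    by (intro has_integral_add has_integral_mult_right rr_int g1_int_left g2_int_left e)
  hence "(f has_integral (integral {-a..-e} rr + phi0 * I1 e + phi1 * ln (sin (c * e)))) {-a..-e}"
    by (rule has_integral_eq[rotated]) (use e in \<open>auto intro!: f_decomp[symmetric]\<close>)
  thus ?thesis by (rule integral_unique)
qed

lemma hadamard: "hadamard_fp_has_value a f (\<phi> 0) (integral {-a..a} rr)"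
proof -
  obtain B where B: "\<And>x. x \<in> {-a..a} \<Longrightarrow> \<bar>rr x\<bar> \<le> B"
  proof -
    have "compact (rr ` {-a..a})" by (intro compact_continuous_image rr_cont_on) simp
    hence "bounded (rr ` {-a..a})" by (rule compact_imp_bounded)
    then obtain B where HB: "\<forall>y\<in>rr ` {-a..a}. norm y \<le> B" by (auto simp: bounded_iff)
    show ?thesis by (rule that[of B]) (use HB in auto)
  qed
  have B0: "B \<ge> 0" using B[of 0] a_pos by force
  define J where "J e = integral {-e..e} rr" for e
  have split: "integral {-a..-e} rr + integral {e..a} rr = integral {-a..a} rr - J e"
    if e: "0 < e" "e \<le> a" for e
  proof -
    have i: "rr integrable_on {lo..hi}" for lo hi using rr_int by blast
    have 1: "integral {-a..-e} rr + integral {-e..a} rr = integral {-a..a} rr"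
      by (rule Henstock_Kurzweil_Integration.integral_combine) (use e i in auto)
    have 2: "integral {-e..e} rr + integral {e..a} rr = integral {-e..a} rr"
      by (rule Henstock_Kurzweil_Integration.integral_combine) (use e i in auto)
    show ?thesis using 1 2 by (simp add: J_def)
  qed
  have J0: "(J \<longlongrightarrow> 0) (at_right 0)"
  proof (rule Lim_null_comparison)
    show "eventually (\<lambda>e. norm (J e) \<le> B * (2 * e)) (at_right 0)"
    proof -
      have "eventually (\<lambda>e::real. e \<in> {0<..<a}) (at_right 0)"
        using a_pos by (intro eventually_at_right_real) auto
      thus ?thesis
      proof eventually_elim
        case (elim e)
        have "norm (J e) \<le> B * Henstock_Kurzweil_Integration.content {-e..e}"
          unfolding J_def
          by (rule has_integral_bound_real[OF B0 finite.emptyI rr_int]) (use elim in \<open>auto intro!: B\<close>)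
        thus ?case using elim by (simp add: content_real)
      qed
    qed
    show "((\<lambda>e. B * (2 * e)) \<longlongrightarrow> 0) (at_right 0)"
      by (auto intro!: tendsto_eq_intros)
  qed
  have lim: "((\<lambda>e. (integral {-a..a} rr - J e) + phi0 * (2 * c * cos (c * e) / sin (c * e) - 2 / e))
           \<longlongrightarrow> (integral {-a..a} rr - 0) + phi0 * 0) (at_right 0)"
    by (intro tendsto_add tendsto_diff tendsto_mult tendsto_const J0 lim_aux3 c_pos)
  have ev: "eventually (\<lambda>e. (integral {-a..a} rr - J e) + phi0 * (2 * c * cos (c * e) / sin (c * e) - 2 / e)
          = integral {-a..-e} f + integral {e..a} f - 2 * \<phi> 0 / e) (at_right 0)"
  proof -
    have "eventually (\<lambda>e::real. e \<in> {0<..<a}) (at_right 0)"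
      using a_pos by (intro eventually_at_right_real) auto
    thus ?thesis
    proof eventually_elim
      case (elim e)
      hence e: "0 < e" "e \<le> a" by auto
      have aux: "phi0 * (2 * c * cos (c * e) / sin (c * e) - 2 / e) = 2 * (phi0 * I1 e) - 2 * phi0 / e"
        by (simp add: I1_def algebra_simps)
      show ?case using split[OF e] f_int_left[OF e] f_int_right[OF e] aux
        unfolding phi0_def[symmetric] by linarith
    qed
  qed
  show ?thesis
    unfolding hadamard_fp_has_value_def
    using Lim_transform_eventually[OF lim ev] by simp
qed

end

lemma reindex_sum:
  fixes u :: "real \<Rightarrow> real"
  assumes n: "n \<ge> 1" and per: "\<And>t. u (t + pi) = u t"
  shows "(\<Sum>i\<in>{-int n..int n - 1} - {0}. u (pi * (real_of_int i / (2 * real n))))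
       = (\<Sum>k=1..2*n-1. u (pi * (real k / real (2*n))))"
proof (rule sum.reindex_bij_witness[where j = "\<lambda>i. if i < 0 then nat (i + 2 * int n) else nat i"
                                         and i = "\<lambda>k. if k \<ge> n then int k - 2 * int n else int k"])
  fix i assume i: "i \<in> {-int n..int n - 1} - {0}"
  show "(if (if i < 0 then nat (i + 2 * int n) else nat i) \<ge> n
         then int (if i < 0 then nat (i + 2 * int n) else nat i) - 2 * int n
         else int (if i < 0 then nat (i + 2 * int n) else nat i)) = i"
    using i by auto
  show "(if i < 0 then nat (i + 2 * int n) else nat i) \<in> {1..2*n-1}"
    using i by auto
  show "u (pi * (real (if i < 0 then nat (i + 2 * int n) else nat i) / real (2*n)))
        = u (pi * (real_of_int i / (2 * real n)))"
  proof (cases "i < 0")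
    case True
    have "real (nat (i + 2 * int n)) = real_of_int i + 2 * real n" using True i by auto
    hence "pi * (real (nat (i + 2 * int n)) / real (2*n)) = pi * (real_of_int i / (2 * real n)) + pi"
      using n by (simp add: field_simps)
    thus ?thesis using True per by simp
  next
    case False
    thus ?thesis using i by simp
  qed
next
  fix k assume k: "k \<in> {1..2*n-1}"
  show "(if (if k \<ge> n then int k - 2 * int n else int k) < 0
         then nat ((if k \<ge> n then int k - 2 * int n else int k) + 2 * int n)
         else nat (if k \<ge> n then int k - 2 * int n else int k)) = k"
    using k by auto
  show "(if k \<ge> n then int k - 2 * int n else int k) \<in> {-int n..int n - 1} - {0}"
    using k by auto
qed

lemma cot_sum_zero:
  assumes m: "m \<ge> (1::nat)"
  shows "(\<Sum>k=1..m-1. cos (pi * (real k / real m)) / sin (pi * (real k / real m))) = 0"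
proof -
  define S where "S = (\<Sum>k=1..m-1. cos (pi * (real k / real m)) / sin (pi * (real k / real m)))"
  have "S = (\<Sum>k=1..m-1. - (cos (pi * (real k / real m)) / sin (pi * (real k / real m))))"
    unfolding S_def
  proof (rule sum.reindex_bij_witness[where i = "\<lambda>k. m - k" and j = "\<lambda>k. m - k"])
    fix k assume k: "k \<in> {1..m-1}"
    have "k \<le> m" using k by auto
    hence "real (m - k) = real m - real k" by (simp add: of_nat_diff)
    hence "pi * (real (m - k) / real m) = pi - pi * (real k / real m)"
      using m by (simp add: field_simps)
    thus "- (cos (pi * (real (m - k) / real m)) / sin (pi * (real (m - k) / real m)))
          = cos (pi * (real k / real m)) / sin (pi * (real k / real m))"
      by simp
  qed auto
  also have "\<dots> = - S" unfolding S_def by (simp add: sum_negf)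
  finally show ?thesis unfolding S_def[symmetric] by simp
qed

context hsetup begin

lemma ch: "n \<ge> 1 \<Longrightarrow> c * (real_of_int i * (a / real n)) = pi * (real_of_int i / (2 * real n))"
  using a_pos by (simp add: c_def field_simps)

lemma sum_g1: "n \<ge> 1 \<Longrightarrow>
  (\<Sum>i\<in>{-int n..int n - 1} - {0}. g1 (real_of_int i * (a / real n))) = c\<^sup>2 * ((4 * real n ^ 2 - 1) / 3)"
proof -
  assume n: "n \<ge> 1"
  have "(\<Sum>i\<in>{-int n..int n - 1} - {0}. g1 (real_of_int i * (a / real n)))
     = c\<^sup>2 * (\<Sum>i\<in>{-int n..int n - 1} - {0}. 1 / (sin (pi * (real_of_int i / (2 * real n))))\<^sup>2)"
    unfolding sum_distrib_left by (intro sum.cong refl) (simp only: g1_def ch[OF n], simp)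
  also have "(\<Sum>i\<in>{-int n..int n - 1} - {0}. 1 / (sin (pi * (real_of_int i / (2 * real n))))\<^sup>2)
      = (\<Sum>k=1..2*n-1. 1 / (sin (pi * (real k / real (2*n))))\<^sup>2)"
    by (rule reindex_sum[OF n, where u = "\<lambda>t. 1 / (sin t)\<^sup>2"]) simp
  also have "\<dots> = (real (2*n) ^ 2 - 1) / 3" using n by (intro csc_sum) simp
  finally show ?thesis by (simp add: power_mult_distrib)
qed

lemma sum_g2: "n \<ge> 1 \<Longrightarrow>
  (\<Sum>i\<in>{-int n..int n - 1} - {0}. g2 (real_of_int i * (a / real n))) = 0"
proof -
  assume n: "n \<ge> 1"
  have "(\<Sum>i\<in>{-int n..int n - 1} - {0}. g2 (real_of_int i * (a / real n)))
     = c * (\<Sum>i\<in>{-int n..int n - 1} - {0}. cos (pi * (real_of_int i / (2 * real n))) / sin (pi * (real_of_int i / (2 * real n))))"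
    unfolding sum_distrib_left by (intro sum.cong refl) (simp only: g2_def ch[OF n], simp)
  also have "(\<Sum>i\<in>{-int n..int n - 1} - {0}. cos (pi * (real_of_int i / (2 * real n))) / sin (pi * (real_of_int i / (2 * real n))))
      = (\<Sum>k=1..2*n-1. cos (pi * (real k / real (2*n))) / sin (pi * (real k / real (2*n))))"
    by (rule reindex_sum[OF n, where u = "\<lambda>t. cos t / sin t"]) simp
  also have "\<dots> = 0" using n by (intro cot_sum_zero) simp
  finally show ?thesis by simp
qed

lemma sum_rr_shift: "n \<ge> 1 \<Longrightarrow>
   (\<Sum>j<2*n. rr (-a + real j * (a / real n))) = (\<Sum>i\<in>{-int n..int n - 1}. rr (real_of_int i * (a / real n)))"
proof -
  assume n: "n \<ge> 1"
  show ?thesis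
  proof (rule sum.reindex_bij_witness[where i = "\<lambda>i. nat (i + int n)" and j = "\<lambda>j. int j - int n"])
    fix j assume j: "j \<in> {..<2*n}"
    have "-a + real j * (a / real n) = real_of_int (int j - int n) * (a / real n)"
      using n by (simp add: field_simps)
    thus "rr (real_of_int (int j - int n) * (a / real n)) = rr (-a + real j * (a / real n))" by simp
  qed auto
qed

lemma trap_eq: "n \<ge> 1 \<Longrightarrow>
  trap_Tn a f n = (a / real n) * ((\<Sum>i\<in>{-int n..int n - 1}. rr (real_of_int i * (a / real n))) - rr 0)
     + phi0 * ((a / real n) * (c\<^sup>2 * ((4 * real n ^ 2 - 1) / 3)))"
proof -
  assume n: "n \<ge> 1"
  have "(\<Sum>i\<in>{-int n..int n - 1} - {0}. f (real_of_int i * (a / real n)))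
      = (\<Sum>i\<in>{-int n..int n - 1} - {0}. rr (real_of_int i * (a / real n))
            + phi0 * g1 (real_of_int i * (a / real n)) + phi1 * g2 (real_of_int i * (a / real n)))"
  proof (intro sum.cong refl f_decomp)
    fix i assume i: "i \<in> {-int n..int n - 1} - {0}"
    have h: "a / real n > 0" using n a_pos by simp
    have "\<bar>real_of_int i\<bar> \<ge> 1" using i by auto
    hence "1 * (a / real n) \<le> \<bar>real_of_int i\<bar> * (a / real n)"
      using h by (intro mult_right_mono) auto
    moreover have "\<bar>real_of_int i * (a / real n)\<bar> = \<bar>real_of_int i\<bar> * (a / real n)"
      using h a_pos by (simp add: abs_mult)
    ultimately have "\<bar>real_of_int i * (a / real n)\<bar> \<ge> a / real n" by (metis mult_1)
    thus "0 < \<bar>real_of_int i * (a / real n)\<bar>" using h by linarith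
    have "\<bar>real_of_int i\<bar> \<le> real n" using i by auto
    hence "\<bar>real_of_int i\<bar> * (a / real n) \<le> real n * (a / real n)"
      using h by (intro mult_right_mono) auto
    moreover have "\<bar>real_of_int i * (a / real n)\<bar> = \<bar>real_of_int i\<bar> * (a / real n)"
      using h a_pos by (simp add: abs_mult)
    ultimately have "\<bar>real_of_int i * (a / real n)\<bar> \<le> real n * (a / real n)" by metis
    thus "\<bar>real_of_int i * (a / real n)\<bar> \<le> a" using n by simp
  qed
  also have "\<dots> = (\<Sum>i\<in>{-int n..int n - 1} - {0}. rr (real_of_int i * (a / real n)))
      + phi0 * (\<Sum>i\<in>{-int n..int n - 1} - {0}. g1 (real_of_int i * (a / real n)))
      + phi1 * (\<Sum>i\<in>{-int n..int n - 1} - {0}. g2 (real_of_int i * (a / real n)))"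
    by (simp add: sum.distrib sum_distrib_left)
  also have "(\<Sum>i\<in>{-int n..int n - 1} - {0}. rr (real_of_int i * (a / real n)))
      = (\<Sum>i\<in>{-int n..int n - 1}. rr (real_of_int i * (a / real n))) - rr 0"
    using n by (subst sum_diff1) auto
  finally have S: "(\<Sum>i\<in>{-int n..int n - 1} - {0}. f (real_of_int i * (a / real n)))
    = ((\<Sum>i\<in>{-int n..int n - 1}. rr (real_of_int i * (a / real n))) - rr 0)
      + phi0 * (\<Sum>i\<in>{-int n..int n - 1} - {0}. g1 (real_of_int i * (a / real n)))
      + phi1 * (\<Sum>i\<in>{-int n..int n - 1} - {0}. g2 (real_of_int i * (a / real n)))" .
  show ?thesis unfolding trap_Tn_def S sum_g1[OF n] sum_g2[OF n] by (simp add: algebra_simps)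
qed

lemma err_eq: "n \<ge> 1 \<Longrightarrow>
  integral {-a..a} rr - (trap_Tn a f n - pi\<^sup>2 / (3 * (a / real n)) * \<phi> 0
                                 + deriv (deriv \<phi>) 0 * (a / real n) / 2)
  = integral {-a..a} rr - (a / real n) * (\<Sum>j<2*n. rr (-a + real j * (a / real n)))"
proof -
  assume n: "n \<ge> 1"
  have key: "(a / real n) * (c\<^sup>2 * (4 * real n ^ 2)) = pi\<^sup>2 / (a / real n)"
    using a_pos n by (simp add: c_def field_simps power2_eq_square)
  show ?thesis
    unfolding trap_eq[OF n] sum_rr_shift[OF n] rr0 phi0_def[symmetric] phi2_def[symmetric]
    using key n a_pos by (simp add: field_simps)
qed

end

context hsetup begin

lemma main:
  "\<exists>I. hadamard_fp_has_value a f (\<phi> 0) I \<and>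
           (\<forall>\<mu>>0. (\<lambda>n. I - (trap_Tn a f n - pi\<^sup>2 / (3 * (a / real n)) * \<phi> 0
                                 + deriv (deriv \<phi>) 0 * (a / real n) / 2))
                    \<in> O[sequentially](\<lambda>n. (a / real n) powr \<mu>))"
proof (intro exI conjI allI impI)
  show "hadamard_fp_has_value a f (\<phi> 0) (integral {-a..a} rr)" by (rule hadamard)
  fix \<mu> :: real assume mu: "\<mu> > 0"
  define m where "m = nat \<lceil>\<mu>\<rceil>"
  have cpos: "(0::int) < \<lceil>\<mu>\<rceil>" using mu by simp
  have m1: "m \<ge> 1" unfolding m_def using cpos by linarith
  have mmu: "\<mu> \<le> real m" using mu by (simp add: m_def)
  obtain C where C: "\<And>n. n \<ge> 1 \<Longrightarrow> \<bar>(a / real n) * (\<Sum>j<2*n. rr (-a + real j * (a / real n)))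
                       - integral {-a..a} rr\<bar> \<le> C * (a / real n)^m"
    using rr_core[OF m1] by blast
  show "(\<lambda>n. integral {-a..a} rr - (trap_Tn a f n - pi\<^sup>2 / (3 * (a / real n)) * \<phi> 0
                                 + deriv (deriv \<phi>) 0 * (a / real n) / 2))
                    \<in> O[sequentially](\<lambda>n. (a / real n) powr \<mu>)"
  proof (rule bigoI[where c = "\<bar>C\<bar>"])
    show "eventually (\<lambda>n. norm (integral {-a..a} rr - (trap_Tn a f n - pi\<^sup>2 / (3 * (a / real n)) * \<phi> 0
                                 + deriv (deriv \<phi>) 0 * (a / real n) / 2))
            \<le> \<bar>C\<bar> * norm ((a / real n) powr \<mu>)) sequentially"
      using eventually_ge_at_top[of "max 1 (nat \<lceil>a\<rceil>)"]
    proof eventually_elim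
      case (elim n)
      have n: "n \<ge> 1" using elim by simp
      have an: "a \<le> real n" using elim by linarith
      define h where "h = a / real n"
      have h0: "h > 0" using n a_pos by (simp add: h_def)
      have h1: "h \<le> 1" using an n by (simp add: h_def field_simps)
      have "norm (integral {-a..a} rr - (trap_Tn a f n - pi\<^sup>2 / (3 * (a / real n)) * \<phi> 0
                                 + deriv (deriv \<phi>) 0 * (a / real n) / 2))
           = \<bar>(a / real n) * (\<Sum>j<2*n. rr (-a + real j * (a / real n))) - integral {-a..a} rr\<bar>"
        unfolding err_eq[OF n] real_norm_def by (rule abs_minus_commute)
      also have "\<dots> \<le> C * h^m" using C[OF n] by (simp add: h_def)
      also have "\<dots> \<le> \<bar>C\<bar> * h^m" using h0 by (intro mult_right_mono) auto
      also have "h^m = h powr real m" using h0 by (simp add: powr_realpow)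
      also have "h powr real m \<le> h powr \<mu>" using h0 h1 mmu by (intro powr_mono') auto
      hence "\<bar>C\<bar> * h powr real m \<le> \<bar>C\<bar> * h powr \<mu>" by (intro mult_left_mono) auto
      also have "h powr \<mu> = norm ((a / real n) powr \<mu>)" by (simp add: h_def)
      finally show ?case .
    qed
  qed
qed

end

theorem mainTheorem1:
  fixes a \<delta> :: real and f \<phi> :: "real \<Rightarrow> real"
  assumes a_pos: "a > 0"
    and periodic: "\<And>x. f (x + 2 * a) = f x"
    and smooth: "smooth_on f (- {2 * a * real_of_int k | k. True})"
    and delta_pos: "\<delta> > 0"
    and analytic: "real_analytic_on \<phi> {-\<delta><..<\<delta>}"
    and near0: "\<And>x. 0 < \<bar>x\<bar> \<Longrightarrow> \<bar>x\<bar> < \<delta> \<Longrightarrow> f x = \<phi> x / x\<^sup>2"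
  shows "\<exists>I. hadamard_fp_has_value a f (\<phi> 0) I \<and>
           (\<forall>\<mu>>0. (\<lambda>n. I - (trap_Tn a f n - pi\<^sup>2 / (3 * (a / real n)) * \<phi> 0
                                 + deriv (deriv \<phi>) 0 * (a / real n) / 2))
                    \<in> O[sequentially](\<lambda>n. (a / real n) powr \<mu>))"
proof -
  interpret hsetup a \<delta> f \<phi>
    by unfold_locales (use assms in auto)
  show ?thesis by (rule main)
qed

end
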